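(* Let $d\ge1$, $\varepsilon>0$, and let $G:\mathbb{R}^d\to\mathbb{R}$ satisfy: $G\ge 0$ and $\mathrm{supp}(G)=\mathbb{R}^d$; $G\in W^{1,1}(\mathbb{R}^d)\cap L^\infty(\mathbb{R}^d)\cap C^2(\mathbb{R}^d)$; $G(x)=g(|x|)$ with $g'(r)<0$ for all $r>0$, $g''(0)<0$, $\lim_{r\to+\infty}g(r)=0$; and $\int G=1$. Let $\rho\in L^2(\mathbb{R}^d)$ be a minimizer on $\mathcal{P}$ of the energy $$E[\rho]=\frac12\int_{\mathbb{R}^d}\rho\,(\varepsilon\rho-G*\rho)\,dx.$$ Then $\rho\nabla(\varepsilon\rho-G*\rho)=0$ a.e. in $\mathbb{R}^d$.
   Context: $\mathcal{P}=\{\rho\in L^1(\mathbb{R}^d):\rho\ge0,\ \int_{\mathbb{R}^d}\rho\,dx=1\}$. $G*\rho(x)=\int G(x-y)\rho(y)\,dy$. *)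

theory Defs
  imports "HOL-Analysis.Analysis"
begin

definition conv :: "('a::euclidean_space \<Rightarrow> real) \<Rightarrow> ('a \<Rightarrow> real) \<Rightarrow> 'a \<Rightarrow> real" where
  "conv G \<rho> x = (\<integral>y. G (x - y) * \<rho> y \<partial>lborel)"

definition Pset :: "('a::euclidean_space \<Rightarrow> real) set" where
  "Pset = {\<rho>. integrable lborel \<rho> \<and> (AE x in lborel. \<rho> x \<ge> 0) \<and> (\<integral>x. \<rho> x \<partial>lborel) = 1}"

definition L2 :: "('a::euclidean_space \<Rightarrow> real) \<Rightarrow> bool" where
  "L2 f \<longleftrightarrow> f \<in> borel_measurable lborel \<and> integrable lborel (\<lambda>x. (f x)\<^sup>2)"

definition energy :: "real \<Rightarrow> ('a::euclidean_space \<Rightarrow> real) \<Rightarrow> ('a \<Rightarrow> real) \<Rightarrow> real" where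
  "energy \<epsilon> G \<rho> = 1/2 * (\<integral>x. \<rho> x * (\<epsilon> * \<rho> x - conv G \<rho> x) \<partial>lborel)"

definition test_fun :: "('a::euclidean_space \<Rightarrow> real) \<Rightarrow> ('a \<Rightarrow> 'a) \<Rightarrow> bool" where
  "test_fun \<phi> D\<phi> \<longleftrightarrow> (\<forall>x. (\<phi> has_derivative (\<lambda>h. D\<phi> x \<bullet> h)) (at x)) \<and>
      continuous_on UNIV D\<phi> \<and> compact (closure {x. \<phi> x \<noteq> 0})"

definition weak_grad :: "('a::euclidean_space \<Rightarrow> real) \<Rightarrow> ('a \<Rightarrow> 'a) \<Rightarrow> bool" where
  "weak_grad f w \<longleftrightarrow>
     f \<in> borel_measurable lborel \<and> w \<in> borel_measurable lborel \<and>
     (\<forall>K. compact K \<longrightarrow> set_integrable lborel K f \<and>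
        (\<forall>i\<in>Basis. set_integrable lborel K (\<lambda>x. w x \<bullet> i))) \<and>
     (\<forall>\<phi> D\<phi>. test_fun \<phi> D\<phi> \<longrightarrow> (\<forall>i\<in>Basis.
        (\<integral>x. f x * (D\<phi> x \<bullet> i) \<partial>lborel) = - (\<integral>x. (w x \<bullet> i) * \<phi> x \<partial>lborel)))"

end

theory Submission
  imports Defs
begin

lemma lborel_distr_refl:
  fixes t :: "'a::euclidean_space"
  shows "distr lborel borel (\<lambda>x. t - x) = lborel"
proof -
  have "lborel = density (distr lborel borel (\<lambda>x. t + (-1) *\<^sub>R x)) (\<lambda>_. \<bar>-1::real\<bar>^DIM('a))"
    by (rule lborel_affine) simp
  then show ?thesis by (simp add: density_1)
qed

lemma distr_refl': "distr lborel lborel (\<lambda>x. t - x) = (lborel :: 'a::euclidean_space measure)"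
  using lborel_distr_refl[of t] by (metis distr_cong sets_lborel)

lemma distr_plus': "distr lborel lborel ((+) c) = (lborel :: 'a::euclidean_space measure)"
  using lborel_distr_plus[of c] by (metis distr_cong sets_lborel)

lemma integrable_refl:
  fixes f :: "'a::euclidean_space \<Rightarrow> real"
  assumes "integrable lborel f"
  shows "integrable lborel (\<lambda>x. f (t - x))"
proof -
  have m: "(\<lambda>x. t - x) \<in> measurable lborel lborel" by simp
  have fm: "f \<in> borel_measurable lborel" using assms by simp
  show ?thesis using integrable_distr_eq[OF m fm] assms distr_refl'[of t] by simp
qed

lemma integral_refl:
  fixes f :: "'a::euclidean_space \<Rightarrow> real"
  assumes "f \<in> borel_measurable lborel"
  shows "(\<integral>x. f (t - x) \<partial>lborel) = (\<integral>x. f x \<partial>lborel)"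
proof -
  have m: "(\<lambda>x. t - x) \<in> measurable lborel lborel" by simp
  show ?thesis using integral_distr[OF m assms] distr_refl'[of t] by simp
qed

lemma integrable_transl:
  fixes f :: "'a::euclidean_space \<Rightarrow> real"
  assumes "integrable lborel f"
  shows "integrable lborel (\<lambda>x. f (c + x))"
proof -
  have m: "(+) c \<in> measurable lborel lborel" by simp
  have fm: "f \<in> borel_measurable lborel" using assms by simp
  show ?thesis using integrable_distr_eq[OF m fm] assms distr_plus'[of c] by simp
qed

lemma integral_transl:
  fixes f :: "'a::euclidean_space \<Rightarrow> real"
  assumes "f \<in> borel_measurable lborel"
  shows "(\<integral>x. f (c + x) \<partial>lborel) = (\<integral>x. f x \<partial>lborel)"
proof -
  have m: "(+) c \<in> measurable lborel lborel" by simp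
  show ?thesis using integral_distr[OF m assms] distr_plus'[of c] by simp
qed

lemma integrable_bounded_mult:
  fixes g h :: "'a \<Rightarrow> real"
  assumes "integrable M g" "h \<in> borel_measurable M" "\<And>x. \<bar>h x\<bar> \<le> C"
  shows "integrable M (\<lambda>x. h x * g x)"
proof (rule Bochner_Integration.integrable_bound)
  show "integrable M (\<lambda>x. C * \<bar>g x\<bar>)" using assms by auto
  show "(\<lambda>x. h x * g x) \<in> borel_measurable M" using assms by (auto intro: borel_measurable_integrable)
  show "AE x in M. norm (h x * g x) \<le> norm (C * \<bar>g x\<bar>)"
  proof (rule AE_I2)
    fix x
    have "\<bar>h x * g x\<bar> \<le> C * \<bar>g x\<bar>" by (simp add: abs_mult assms(3) mult_right_mono)
    then show "norm (h x * g x) \<le> norm (C * \<bar>g x\<bar>)" by auto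
  qed
qed

lemma bounded_set_integrable:
  fixes h :: "'a::euclidean_space \<Rightarrow> real"
  assumes "compact K" "h \<in> borel_measurable lborel" "\<And>x. \<bar>h x\<bar> \<le> M"
  shows "set_integrable lborel K h"
  unfolding set_integrable_def
proof -
  have "integrable lborel (indicator K :: 'a \<Rightarrow> real)"
    using assms by (intro integrable_real_indicator emeasure_compact_finite) (auto intro: borel_compact)
  then have "integrable lborel (\<lambda>x. h x * indicator K x)"
    by (rule integrable_bounded_mult) (use assms in auto)
  then show "integrable lborel (\<lambda>x. indicator K x *\<^sub>R h x)" by (simp add: mult.commute)
qed

lemma dir_deriv:
  fixes \<phi> :: "'a::euclidean_space \<Rightarrow> real"
  assumes "(\<phi> has_derivative (\<lambda>h. D \<bullet> h)) (at (x + r *\<^sub>R v))"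
  shows "((\<lambda>r. \<phi> (x + r *\<^sub>R v)) has_real_derivative (D \<bullet> v)) (at r within S)"
proof -
  have l: "((\<lambda>r. x + r *\<^sub>R v) has_derivative (\<lambda>h. h *\<^sub>R v)) (at r within S)"
    by (auto intro!: derivative_eq_intros)
  have "((\<lambda>r. \<phi> (x + r *\<^sub>R v)) has_derivative (\<lambda>h. D \<bullet> (h *\<^sub>R v))) (at r within S)"
    using has_derivative_in_compose[OF l has_derivative_at_withinI[OF assms, of "(\<lambda>r. x + r *\<^sub>R v) ` S"]]
    by (simp add: o_def)
  moreover have "(\<lambda>h. h * (D \<bullet> v)) = (*) (D \<bullet> v)" by (rule ext) (simp add: mult.commute)
  ultimately show ?thesis
    unfolding has_field_derivative_def by simp
qed

lemma dir_mvt: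
  fixes \<phi> :: "'a::euclidean_space \<Rightarrow> real"
  assumes d: "\<And>y. (\<phi> has_derivative (\<lambda>h. D\<phi> y \<bullet> h)) (at y)"
    and b: "\<And>r. 0 \<le> r \<Longrightarrow> r \<le> s \<Longrightarrow> \<bar>D\<phi> (x + r *\<^sub>R v) \<bullet> v\<bar> \<le> B" and s: "0 \<le> s"
  shows "\<bar>\<phi> (x + s *\<^sub>R v) - \<phi> x\<bar> \<le> B * s"
proof (cases "s = 0")
  case True then show ?thesis by simp
next
  case False
  then have s0: "0 < s" using s by simp
  have "\<And>r. DERIV (\<lambda>r. \<phi> (x + r *\<^sub>R v)) r :> D\<phi> (x + r *\<^sub>R v) \<bullet> v"
    by (rule dir_deriv) (rule d)
  from MVT2[OF s0, of "\<lambda>r. \<phi> (x + r *\<^sub>R v)", OF this]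
  obtain z where z: "0 < z" "z < s" "\<phi> (x + s *\<^sub>R v) - \<phi> (x + 0 *\<^sub>R v) = (s - 0) * (D\<phi> (x + z *\<^sub>R v) \<bullet> v)"
    by blast
  have "\<bar>\<phi> (x + s *\<^sub>R v) - \<phi> x\<bar> = s * \<bar>D\<phi> (x + z *\<^sub>R v) \<bullet> v\<bar>"
    using z s0 by (simp add: abs_mult)
  also have "\<dots> \<le> s * B" using b[of z] z s0 by (intro mult_left_mono) auto
  finally show ?thesis by (simp add: mult.commute)
qed

lemma tn_lim: "filterlim (\<lambda>n. 1 / real (Suc n)) (at 0 within {0..1}) sequentially"
proof -
  have "(\<lambda>n. 1 / real (Suc n)) \<longlonglongrightarrow> 0"
    using LIMSEQ_Suc[OF lim_const_over_n[of 1]] by simp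
  moreover have "\<forall>\<^sub>F n in sequentially. 1 / real (Suc n) \<in> {0..1} \<and> 1 / real (Suc n) \<noteq> 0"
    by (auto simp: field_simps)
  ultimately show ?thesis unfolding filterlim_at by auto
qed

lemma tn_lim': "filterlim (\<lambda>n. 1 / real (Suc n)) (at 0) sequentially"
proof -
  have "(\<lambda>n. 1 / real (Suc n)) \<longlonglongrightarrow> 0"
    using LIMSEQ_Suc[OF lim_const_over_n[of 1]] by simp
  moreover have "\<forall>\<^sub>F n in sequentially. 1 / real (Suc n) \<in> UNIV \<and> 1 / real (Suc n) \<noteq> 0"
    by (auto simp: field_simps)
  ultimately show ?thesis unfolding filterlim_at by auto
qed

lemma weak_grad_diffquot:
  fixes f :: "'a::euclidean_space \<Rightarrow> real" and w :: "'a \<Rightarrow> 'a"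
  assumes fm: "f \<in> borel_measurable borel" and wm: "w \<in> borel_measurable borel"
    and fb: "\<And>x. \<bar>f x\<bar> \<le> Mf" and wb: "\<And>x i. i \<in> Basis \<Longrightarrow> \<bar>w x \<bullet> i\<bar> \<le> Mw"
    and lip: "\<And>x i t. i \<in> Basis \<Longrightarrow> 0 \<le> t \<Longrightarrow> t \<le> 1 \<Longrightarrow> \<bar>f (x + t *\<^sub>R i) - f x\<bar> \<le> L * t"
    and der: "\<And>x i. i \<in> Basis \<Longrightarrow> ((\<lambda>t. f (x + t *\<^sub>R i)) has_real_derivative (w x \<bullet> i)) (at 0 within {0..1})"
  shows "weak_grad f w"
  unfolding weak_grad_def
proof (intro conjI allI impI ballI)
  show "f \<in> borel_measurable lborel" using fm by simp
  show "w \<in> borel_measurable lborel" using wm by simp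
next
  fix K :: "'a set" assume K: "compact K"
  show "set_integrable lborel K f" by (rule bounded_set_integrable[OF K _ fb]) (use fm in simp)
next
  fix K :: "'a set" and i :: 'a assume K: "compact K" and i: "i \<in> Basis"
  show "set_integrable lborel K (\<lambda>x. w x \<bullet> i)"
    by (rule bounded_set_integrable[OF K _ wb[OF i]]) (use wm in simp)
next
  fix \<phi> :: "'a \<Rightarrow> real" and D\<phi> :: "'a \<Rightarrow> 'a" and i :: 'a
  assume tf: "test_fun \<phi> D\<phi>" and i: "i \<in> Basis"
  have d: "\<And>y. (\<phi> has_derivative (\<lambda>h. D\<phi> y \<bullet> h)) (at y)" and Dc: "continuous_on UNIV D\<phi>"
    and Kc: "compact (closure {x. \<phi> x \<noteq> 0})" using tf unfolding test_fun_def by auto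
  define K where "K = closure {x. \<phi> x \<noteq> 0}"
  have Kc: "compact K" using Kc K_def by simp
  have phi0: "\<And>x. x \<notin> K \<Longrightarrow> \<phi> x = 0" unfolding K_def using closure_subset[of "{x. \<phi> x \<noteq> 0}"] by blast
  have phic: "continuous_on UNIV \<phi>"
    by (intro continuous_at_imp_continuous_on ballI has_derivative_continuous[OF d])
  have phim: "\<phi> \<in> borel_measurable borel" by (rule borel_measurable_continuous_onI[OF phic])
  have Dm: "D\<phi> \<in> borel_measurable borel" by (rule borel_measurable_continuous_onI[OF Dc])
  have "integrable lborel (\<lambda>x. indicator K x *\<^sub>R \<phi> x)"
    by (rule borel_integrable_compact[OF Kc continuous_on_subset[OF phic]]) auto
  moreover have "(\<lambda>x. indicator K x *\<^sub>R \<phi> x) = \<phi>"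
    using phi0 by (intro ext) (auto simp: indicator_def)
  ultimately have phi_int: "integrable lborel \<phi>" by simp
  define K1 where "K1 = {a + b | a b. a \<in> K \<and> b \<in> cball (0::'a) 1}"
  define K2 where "K2 = {a + b | a b. a \<in> K \<and> b \<in> cball (0::'a) 2}"
  have K1c: "compact K1" unfolding K1_def by (intro compact_sums Kc compact_cball)
  have K2c: "compact K2" unfolding K2_def by (intro compact_sums Kc compact_cball)
  have "bounded (D\<phi> ` K2)"
    by (intro compact_imp_bounded compact_continuous_image continuous_on_subset[OF Dc] K2c) auto
  then obtain B where Bpos: "B > 0" and B0: "\<forall>z\<in>D\<phi> ` K2. norm z \<le> B"
    unfolding bounded_pos by blast
  have B: "\<And>y. y \<in> K2 \<Longrightarrow> norm (D\<phi> y) \<le> B" using B0 by blast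
  have Mf0: "0 \<le> Mf" using fb[of 0] by simp
  define t where "t n = 1 / real (Suc n)" for n
  have tpos: "\<And>n. 0 < t n" and tle: "\<And>n. t n \<le> 1" unfolding t_def by (auto simp: field_simps)
  have EQ: "(\<integral>x. f x * ((\<phi> (x - t n *\<^sub>R i) - \<phi> x) / t n) \<partial>lborel)
          = (\<integral>x. (f (x + t n *\<^sub>R i) - f x) / t n * \<phi> x \<partial>lborel)" for n
  proof -
    let ?s = "t n"
    have fm': "f \<in> borel_measurable lborel" using fm by simp
    have i0: "integrable lborel (\<lambda>x. \<phi> ((- ?s *\<^sub>R i) + x))"
      by (rule integrable_transl[OF phi_int])
    have i1: "integrable lborel (\<lambda>x. f x * \<phi> (x - ?s *\<^sub>R i))"
      using integrable_bounded_mult[OF i0 fm' fb] by (simp add: algebra_simps)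
    have i2: "integrable lborel (\<lambda>x. f x * \<phi> x)"
      using integrable_bounded_mult[OF phi_int fm' fb] .
    have i3: "integrable lborel (\<lambda>x. f (x + ?s *\<^sub>R i) * \<phi> x)"
      by (rule integrable_bounded_mult[OF phi_int _ fb]) (use fm in simp)
    have tr: "(\<integral>x. f x * \<phi> (x - ?s *\<^sub>R i) \<partial>lborel) = (\<integral>x. f (x + ?s *\<^sub>R i) * \<phi> x \<partial>lborel)"
    proof -
      have "(\<integral>x. f (?s *\<^sub>R i + x) * \<phi> (?s *\<^sub>R i + x - ?s *\<^sub>R i) \<partial>lborel)
           = (\<integral>x. f x * \<phi> (x - ?s *\<^sub>R i) \<partial>lborel)"
        by (rule integral_transl) (use fm phim in simp)
      then show ?thesis by (simp add: add.commute)
    qed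
    have "(\<integral>x. f x * ((\<phi> (x - ?s *\<^sub>R i) - \<phi> x) / ?s) \<partial>lborel)
        = (\<integral>x. (f x * \<phi> (x - ?s *\<^sub>R i) - f x * \<phi> x) / ?s \<partial>lborel)"
      by (rule Bochner_Integration.integral_cong) (auto simp: field_simps)
    also have "\<dots> = ((\<integral>x. f x * \<phi> (x - ?s *\<^sub>R i) \<partial>lborel) - (\<integral>x. f x * \<phi> x \<partial>lborel)) / ?s"
      using i1 i2 by simp
    also have "\<dots> = ((\<integral>x. f (x + ?s *\<^sub>R i) * \<phi> x \<partial>lborel) - (\<integral>x. f x * \<phi> x \<partial>lborel)) / ?s"
      using tr by simp
    also have "\<dots> = (\<integral>x. (f (x + ?s *\<^sub>R i) * \<phi> x - f x * \<phi> x) / ?s \<partial>lborel)"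
      using i3 i2 by simp
    also have "\<dots> = (\<integral>x. (f (x + ?s *\<^sub>R i) - f x) / ?s * \<phi> x \<partial>lborel)"
      by (rule Bochner_Integration.integral_cong) (auto simp: field_simps)
    finally show ?thesis .
  qed
  have LIM1: "(\<lambda>n. \<integral>x. f x * ((\<phi> (x - t n *\<^sub>R i) - \<phi> x) / t n) \<partial>lborel)
      \<longlonglongrightarrow> (\<integral>x. f x * (- (D\<phi> x \<bullet> i)) \<partial>lborel)"
  proof (rule integral_dominated_convergence[where w="\<lambda>x. Mf * B * indicator K1 x"])
    show "(\<lambda>x. f x * (- (D\<phi> x \<bullet> i))) \<in> borel_measurable lborel" using fm Dm by simp
    show "\<And>n. (\<lambda>x. f x * ((\<phi> (x - t n *\<^sub>R i) - \<phi> x) / t n)) \<in> borel_measurable lborel"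
      using fm phim by simp
    have "integrable lborel (indicator K1 :: 'a \<Rightarrow> real)"
      using K1c by (intro integrable_real_indicator emeasure_compact_finite) (auto intro: borel_compact)
    then show "integrable lborel (\<lambda>x. Mf * B * indicator K1 x)" by simp
    show "AE x in lborel. (\<lambda>n. f x * ((\<phi> (x - t n *\<^sub>R i) - \<phi> x) / t n)) \<longlonglongrightarrow> f x * (- (D\<phi> x \<bullet> i))"
    proof (rule AE_I2)
      fix x
      have "((\<lambda>r. \<phi> (x + r *\<^sub>R (-i))) has_real_derivative (D\<phi> x \<bullet> (-i))) (at 0)"
        by (rule dir_deriv) (simp add: d)
      then have "((\<lambda>y. (\<phi> (x + y *\<^sub>R (-i)) - \<phi> (x + 0 *\<^sub>R (-i))) / (y - 0)) \<longlongrightarrow> D\<phi> x \<bullet> (-i)) (at 0)"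
        unfolding has_field_derivative_iff .
      from filterlim_compose[OF this tn_lim']
      have "(\<lambda>n. (\<phi> (x - t n *\<^sub>R i) - \<phi> x) / t n) \<longlonglongrightarrow> - (D\<phi> x \<bullet> i)"
        by (simp add: t_def)
      then show "(\<lambda>n. f x * ((\<phi> (x - t n *\<^sub>R i) - \<phi> x) / t n)) \<longlonglongrightarrow> f x * (- (D\<phi> x \<bullet> i))"
        by (intro tendsto_mult_left)
    qed
    fix n
    show "AE x in lborel. norm (f x * ((\<phi> (x - t n *\<^sub>R i) - \<phi> x) / t n)) \<le> Mf * B * indicator K1 x"
    proof (rule AE_I2)
      fix x
      show "norm (f x * ((\<phi> (x - t n *\<^sub>R i) - \<phi> x) / t n)) \<le> Mf * B * indicator K1 x"
      proof (cases "x \<in> K1")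
        case True
        then obtain a b where ab: "x = a + b" "a \<in> K" "norm b \<le> 1" unfolding K1_def by auto
        have "\<bar>\<phi> (x + t n *\<^sub>R (-i)) - \<phi> x\<bar> \<le> B * t n"
        proof (rule dir_mvt[OF d])
          fix r assume r: "0 \<le> r" "r \<le> t n"
          have "x + r *\<^sub>R (-i) = a + (b - r *\<^sub>R i)" using ab by (simp add: algebra_simps)
          moreover have "norm (b - r *\<^sub>R i) \<le> 2"
          proof -
            have "norm (b - r *\<^sub>R i) \<le> norm b + norm (r *\<^sub>R i)" by (rule norm_triangle_ineq4)
            also have "\<dots> \<le> 1 + 1" using ab r tle[of n] i by (intro add_mono) auto
            finally show ?thesis by simp
          qed
          ultimately have "x + r *\<^sub>R (-i) \<in> K2" unfolding K2_def using ab by force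
          then have "norm (D\<phi> (x + r *\<^sub>R (-i))) \<le> B" by (rule B)
          moreover have "\<bar>D\<phi> (x + r *\<^sub>R (-i)) \<bullet> (-i)\<bar> \<le> norm (D\<phi> (x + r *\<^sub>R (-i)))"
            using Basis_le_norm[OF i] by simp
          ultimately show "\<bar>D\<phi> (x + r *\<^sub>R (-i)) \<bullet> (-i)\<bar> \<le> B" by linarith
        qed (use tpos[of n] in simp)
        then have h: "\<bar>\<phi> (x - t n *\<^sub>R i) - \<phi> x\<bar> \<le> B * t n" by simp
        have "norm (f x * ((\<phi> (x - t n *\<^sub>R i) - \<phi> x) / t n)) = \<bar>f x\<bar> * (\<bar>\<phi> (x - t n *\<^sub>R i) - \<phi> x\<bar> / t n)"
          using tpos[of n] by (simp add: abs_mult)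
        also have "\<dots> \<le> Mf * B"
        proof (rule mult_mono)
          show "\<bar>\<phi> (x - t n *\<^sub>R i) - \<phi> x\<bar> / t n \<le> B" using h tpos[of n] by (simp add: divide_le_eq)
        qed (use fb Bpos Mf0 tpos[of n] in auto)
        finally show ?thesis using True by simp
      next
        case False
        have "x \<notin> K" using False unfolding K1_def by (metis (mono_tags, lifting) add.right_neutral centre_in_cball mem_Collect_eq zero_le_one)
        moreover have "x - t n *\<^sub>R i \<notin> K"
        proof
          assume "x - t n *\<^sub>R i \<in> K"
          moreover have "norm (t n *\<^sub>R i) \<le> 1" using tle[of n] tpos[of n] i by simp
          ultimately have "x \<in> K1" unfolding K1_def
            by (smt (verit, best) diff_add_cancel mem_Collect_eq mem_cball_0)
          then show False using False by simp
        qed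
        ultimately show ?thesis using phi0 False by simp
      qed
    qed
  qed
  have LIM2: "(\<lambda>n. \<integral>x. (f (x + t n *\<^sub>R i) - f x) / t n * \<phi> x \<partial>lborel)
      \<longlonglongrightarrow> (\<integral>x. (w x \<bullet> i) * \<phi> x \<partial>lborel)"
  proof (rule integral_dominated_convergence[where w="\<lambda>x. L * \<bar>\<phi> x\<bar>"])
    show "(\<lambda>x. (w x \<bullet> i) * \<phi> x) \<in> borel_measurable lborel" using wm phim by simp
    show "\<And>n. (\<lambda>x. (f (x + t n *\<^sub>R i) - f x) / t n * \<phi> x) \<in> borel_measurable lborel"
      using fm phim by simp
    show "integrable lborel (\<lambda>x. L * \<bar>\<phi> x\<bar>)" using phi_int by simp
    show "AE x in lborel. (\<lambda>n. (f (x + t n *\<^sub>R i) - f x) / t n * \<phi> x) \<longlonglongrightarrow> (w x \<bullet> i) * \<phi> x"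
    proof (rule AE_I2)
      fix x
      have "((\<lambda>y. (f (x + y *\<^sub>R i) - f (x + 0 *\<^sub>R i)) / (y - 0)) \<longlongrightarrow> w x \<bullet> i) (at 0 within {0..1})"
        using der[OF i, of x] unfolding has_field_derivative_iff .
      from filterlim_compose[OF this tn_lim]
      have "(\<lambda>n. (f (x + t n *\<^sub>R i) - f x) / t n) \<longlonglongrightarrow> w x \<bullet> i"
        by (simp add: t_def)
      then show "(\<lambda>n. (f (x + t n *\<^sub>R i) - f x) / t n * \<phi> x) \<longlonglongrightarrow> (w x \<bullet> i) * \<phi> x"
        by (intro tendsto_mult_right)
    qed
    fix n
    show "AE x in lborel. norm ((f (x + t n *\<^sub>R i) - f x) / t n * \<phi> x) \<le> L * \<bar>\<phi> x\<bar>"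
    proof (rule AE_I2)
      fix x
      have h: "\<bar>f (x + t n *\<^sub>R i) - f x\<bar> / t n \<le> L"
        using lip[OF i, of "t n" x] tpos[of n] tle[of n] by (simp add: divide_le_eq)
      have "norm ((f (x + t n *\<^sub>R i) - f x) / t n * \<phi> x) = \<bar>f (x + t n *\<^sub>R i) - f x\<bar> / t n * \<bar>\<phi> x\<bar>"
        using tpos[of n] by (simp add: abs_mult)
      also have "\<dots> \<le> L * \<bar>\<phi> x\<bar>" using h by (intro mult_right_mono) auto
      finally show "norm ((f (x + t n *\<^sub>R i) - f x) / t n * \<phi> x) \<le> L * \<bar>\<phi> x\<bar>" .
    qed
  qed
  have "(\<integral>x. f x * (- (D\<phi> x \<bullet> i)) \<partial>lborel) = (\<integral>x. (w x \<bullet> i) * \<phi> x \<partial>lborel)"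
  proof -
    have ab: "(\<lambda>n. \<integral>x. f x * ((\<phi> (x - t n *\<^sub>R i) - \<phi> x) / t n) \<partial>lborel)
      = (\<lambda>n. \<integral>x. (f (x + t n *\<^sub>R i) - f x) / t n * \<phi> x \<partial>lborel)"
      by (rule ext) (rule EQ)
    show ?thesis using LIMSEQ_unique[OF LIM1 LIM2[folded ab]] .
  qed
  moreover have "(\<integral>x. f x * (- (D\<phi> x \<bullet> i)) \<partial>lborel) = - (\<integral>x. f x * (D\<phi> x \<bullet> i) \<partial>lborel)"
    by simp
  ultimately show "(\<integral>x. f x * (D\<phi> x \<bullet> i) \<partial>lborel) = - (\<integral>x. (w x \<bullet> i) * \<phi> x \<partial>lborel)"
    by linarith
qed

lemma conv_integrable:
  fixes K h :: "'a::euclidean_space \<Rightarrow> real"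
  assumes Km: "K \<in> borel_measurable borel" and Kb: "\<And>x. \<bar>K x\<bar> \<le> SK" and h: "integrable lborel h"
  shows "integrable lborel (\<lambda>y. K (x - y) * h y)"
  by (rule integrable_bounded_mult[OF h]) (use Km Kb in auto)

lemma conv_bound:
  fixes K h :: "'a::euclidean_space \<Rightarrow> real"
  assumes Km: "K \<in> borel_measurable borel" and Kb: "\<And>x. \<bar>K x\<bar> \<le> SK" and h: "integrable lborel h"
  shows "\<bar>conv K h x\<bar> \<le> SK * (\<integral>y. \<bar>h y\<bar> \<partial>lborel)"
proof -
  have "\<bar>conv K h x\<bar> \<le> (\<integral>y. SK * \<bar>h y\<bar> \<partial>lborel)"
    unfolding conv_def
  proof (rule integral_abs_bound_integral)
    show "integrable lborel (\<lambda>y. K (x - y) * h y)" by (rule conv_integrable[OF Km Kb h])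
    show "integrable lborel (\<lambda>y. SK * \<bar>h y\<bar>)" using h by simp
    fix y
    show "\<bar>K (x - y) * h y\<bar> \<le> SK * \<bar>h y\<bar>" by (simp add: abs_mult Kb mult_right_mono)
  qed
  then show ?thesis by simp
qed

lemma conv_meas:
  fixes K h :: "'a::euclidean_space \<Rightarrow> real"
  assumes Km[measurable]: "K \<in> borel_measurable borel" and hm[measurable]: "h \<in> borel_measurable lborel"
  shows "conv K h \<in> borel_measurable borel"
proof -
  have "(\<lambda>x. \<integral>y. K (x - y) * h y \<partial>lborel) \<in> borel_measurable lborel"
    by measurable
  then show ?thesis unfolding conv_def[abs_def] by simp
qed

lemma conv_cont:
  fixes K h :: "'a::euclidean_space \<Rightarrow> real"
  assumes Kc: "continuous_on UNIV K" and Kb: "\<And>x. \<bar>K x\<bar> \<le> SK" and h: "integrable lborel h"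
  shows "continuous_on UNIV (conv K h)"
proof -
  have Km: "K \<in> borel_measurable borel" by (rule borel_measurable_continuous_onI[OF Kc])
  have "continuous (at x) (conv K h)" for x
  proof (rule continuous_at_sequentiallyI)
    fix z assume z: "z \<longlonglongrightarrow> x"
    show "(\<lambda>n. conv K h (z n)) \<longlonglongrightarrow> conv K h x"
      unfolding conv_def
    proof (rule integral_dominated_convergence[where w="\<lambda>y. SK * \<bar>h y\<bar>"])
      show "(\<lambda>y. K (x - y) * h y) \<in> borel_measurable lborel"
        using conv_integrable[OF Km Kb h] by simp
      show "\<And>n. (\<lambda>y. K (z n - y) * h y) \<in> borel_measurable lborel"
        using conv_integrable[OF Km Kb h] by simp
      show "integrable lborel (\<lambda>y. SK * \<bar>h y\<bar>)" using h by simp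
      show "AE y in lborel. (\<lambda>n. K (z n - y) * h y) \<longlonglongrightarrow> K (x - y) * h y"
      proof (rule AE_I2)
        fix y
        have "(\<lambda>n. z n - y) \<longlonglongrightarrow> x - y" using z by (intro tendsto_intros)
        moreover have "isCont K (x - y)" using Kc by (simp add: continuous_on_eq_continuous_at)
        ultimately have "(\<lambda>n. K (z n - y)) \<longlonglongrightarrow> K (x - y)"
          by (rule isCont_tendsto_compose[rotated])
        then show "(\<lambda>n. K (z n - y) * h y) \<longlonglongrightarrow> K (x - y) * h y" by (intro tendsto_intros)
      qed
      fix n
      show "AE y in lborel. norm (K (z n - y) * h y) \<le> SK * \<bar>h y\<bar>"
        by (rule AE_I2) (simp add: abs_mult Kb mult_right_mono)
    qed
  qed
  then show ?thesis by (simp add: continuous_on_eq_continuous_at)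
qed

lemma conv_lin:
  fixes K h1 h2 :: "'a::euclidean_space \<Rightarrow> real"
  assumes Km: "K \<in> borel_measurable borel" and Kb: "\<And>x. \<bar>K x\<bar> \<le> SK"
    and h1: "integrable lborel h1" and h2: "integrable lborel h2"
  shows "conv K (\<lambda>y. a * h1 y + b * h2 y) x = a * conv K h1 x + b * conv K h2 x"
proof -
  have "conv K (\<lambda>y. a * h1 y + b * h2 y) x = (\<integral>y. a * (K (x - y) * h1 y) + b * (K (x - y) * h2 y) \<partial>lborel)"
    unfolding conv_def by (rule Bochner_Integration.integral_cong) (auto simp: algebra_simps)
  also have "\<dots> = a * conv K h1 x + b * conv K h2 x"
    unfolding conv_def using conv_integrable[OF Km Kb h1] conv_integrable[OF Km Kb h2] by simp
  finally show ?thesis .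
qed

lemma conv_sym:
  fixes K f h :: "'a::euclidean_space \<Rightarrow> real"
  assumes Km[measurable]: "K \<in> borel_measurable borel" and Kb: "\<And>x. \<bar>K x\<bar> \<le> SK"
    and Ks: "\<And>z. K (- z) = K z"
    and f: "integrable lborel f" and h: "integrable lborel h"
  shows "(\<integral>x. f x * conv K h x \<partial>lborel) = (\<integral>x. h x * conv K f x \<partial>lborel)"
proof -
  have fm[measurable]: "f \<in> borel_measurable lborel" and hm[measurable]: "h \<in> borel_measurable lborel"
    using f h by auto
  let ?F = "\<lambda>x y. f x * K (x - y) * h y"
  have SK0: "0 \<le> SK" using Kb[of 0] by simp
  have int: "integrable (lborel \<Otimes>\<^sub>M lborel) (case_prod ?F)"
  proof (rule lborel_pair.Fubini_integrable)
    show "case_prod ?F \<in> borel_measurable (lborel \<Otimes>\<^sub>M lborel)" by measurable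
    show "integrable lborel (\<lambda>x. \<integral>y. norm (case_prod ?F (x, y)) \<partial>lborel)"
    proof (rule Bochner_Integration.integrable_bound)
      show "integrable lborel (\<lambda>x. \<bar>f x\<bar> * (SK * (\<integral>y. \<bar>h y\<bar> \<partial>lborel)))" using f by simp
      show "(\<lambda>x. \<integral>y. norm (case_prod ?F (x, y)) \<partial>lborel) \<in> borel_measurable lborel" by measurable
      show "AE x in lborel. norm (\<integral>y. norm (case_prod ?F (x, y)) \<partial>lborel)
          \<le> norm (\<bar>f x\<bar> * (SK * (\<integral>y. \<bar>h y\<bar> \<partial>lborel)))"
      proof (rule AE_I2)
        fix x
        have "(\<integral>y. norm (?F x y) \<partial>lborel) \<le> (\<integral>y. \<bar>f x\<bar> * SK * \<bar>h y\<bar> \<partial>lborel)"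
        proof (rule integral_mono)
          show "integrable lborel (\<lambda>y. norm (?F x y))"
            using integrable_mult_right[OF integrable_norm[OF conv_integrable[OF Km Kb h, of x]], of "\<bar>f x\<bar>"]
            by (simp add: abs_mult mult.assoc)
          show "integrable lborel (\<lambda>y. \<bar>f x\<bar> * SK * \<bar>h y\<bar>)" using h by simp
          fix y show "norm (?F x y) \<le> \<bar>f x\<bar> * SK * \<bar>h y\<bar>"
            by (simp add: abs_mult Kb mult_left_mono mult_right_mono)
        qed
        moreover have "0 \<le> (\<integral>y. norm (?F x y) \<partial>lborel)" by simp
        moreover have "0 \<le> (\<integral>y. \<bar>h y\<bar> \<partial>lborel)" by simp
        ultimately show "norm (\<integral>y. norm (case_prod ?F (x, y)) \<partial>lborel)
          \<le> norm (\<bar>f x\<bar> * (SK * (\<integral>y. \<bar>h y\<bar> \<partial>lborel)))"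
          using SK0 by (simp add: abs_mult mult.assoc)
      qed
    qed
    show "AE x in lborel. integrable lborel (\<lambda>y. case_prod ?F (x, y))"
    proof (rule AE_I2)
      fix x
      show "integrable lborel (\<lambda>y. case_prod ?F (x, y))"
        using integrable_mult_right[OF conv_integrable[OF Km Kb h, of x], of "f x"] by (simp add: mult.assoc)
    qed
  qed
  have "(\<integral>x. f x * conv K h x \<partial>lborel) = (\<integral>x. \<integral>y. ?F x y \<partial>lborel \<partial>lborel)"
    unfolding conv_def by (simp add: mult.assoc)
  also have "\<dots> = (\<integral>y. \<integral>x. ?F x y \<partial>lborel \<partial>lborel)"
    using lborel_pair.Fubini_integral[OF int] by simp
  also have "\<dots> = (\<integral>y. h y * conv K f y \<partial>lborel)"
  proof (rule Bochner_Integration.integral_cong[OF refl])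
    fix y
    have "K (x - y) = K (y - x)" for x using Ks[of "y - x"] by simp
    then show "(\<integral>x. ?F x y \<partial>lborel) = h y * conv K f y"
      unfolding conv_def by (simp add: algebra_simps flip: integral_mult_right_zero)
  qed
  finally show ?thesis .
qed

lemma sq_ineq: "((A::real) + B)\<^sup>2 \<le> 2 * A\<^sup>2 + 2 * B\<^sup>2"
proof -
  have "2 * A\<^sup>2 + 2 * B\<^sup>2 - (A + B)\<^sup>2 = (A - B)\<^sup>2" by (simp add: power2_eq_square algebra_simps)
  moreover have "(A - B)\<^sup>2 \<ge> 0" by simp
  ultimately show ?thesis by linarith
qed
lemma prod_ineq: "\<bar>(A::real) * B\<bar> \<le> A\<^sup>2 + B\<^sup>2"
proof -
  have "A\<^sup>2 + B\<^sup>2 - 2 * \<bar>A * B\<bar> = (\<bar>A\<bar> - \<bar>B\<bar>)\<^sup>2" by (simp add: power2_eq_square algebra_simps abs_mult)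
  moreover have "(\<bar>A\<bar> - \<bar>B\<bar>)\<^sup>2 \<ge> 0" by simp
  moreover have "\<bar>A * B\<bar> \<ge> 0" by simp
  ultimately show ?thesis by linarith
qed

lemma sq_int_lin:
  fixes f g :: "'a::euclidean_space \<Rightarrow> real"
  assumes fm: "f \<in> borel_measurable lborel" and gm: "g \<in> borel_measurable lborel"
    and f2: "integrable lborel (\<lambda>x. (f x)\<^sup>2)" and g2: "integrable lborel (\<lambda>x. (g x)\<^sup>2)"
  shows "integrable lborel (\<lambda>x. (a * f x + b * g x)\<^sup>2)"
proof (rule Bochner_Integration.integrable_bound)
  show "integrable lborel (\<lambda>x. 2 * a\<^sup>2 * (f x)\<^sup>2 + 2 * b\<^sup>2 * (g x)\<^sup>2)" using f2 g2 by simp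
  show "(\<lambda>x. (a * f x + b * g x)\<^sup>2) \<in> borel_measurable lborel" using fm gm by simp
  show "AE x in lborel. norm ((a * f x + b * g x)\<^sup>2) \<le> norm (2 * a\<^sup>2 * (f x)\<^sup>2 + 2 * b\<^sup>2 * (g x)\<^sup>2)"
  proof (rule AE_I2)
    fix x
    have "(a * f x + b * g x)\<^sup>2 \<le> 2 * a\<^sup>2 * (f x)\<^sup>2 + 2 * b\<^sup>2 * (g x)\<^sup>2"
      using sq_ineq[of "a * f x" "b * g x"] by (simp add: power_mult_distrib)
    then show "norm ((a * f x + b * g x)\<^sup>2) \<le> norm (2 * a\<^sup>2 * (f x)\<^sup>2 + 2 * b\<^sup>2 * (g x)\<^sup>2)"
      by simp
  qed
qed

lemma prod_int:
  fixes f g :: "'a::euclidean_space \<Rightarrow> real"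
  assumes fm: "f \<in> borel_measurable lborel" and gm: "g \<in> borel_measurable lborel"
    and f2: "integrable lborel (\<lambda>x. (f x)\<^sup>2)" and g2: "integrable lborel (\<lambda>x. (g x)\<^sup>2)"
  shows "integrable lborel (\<lambda>x. f x * g x)"
proof (rule Bochner_Integration.integrable_bound)
  show "integrable lborel (\<lambda>x. (f x)\<^sup>2 + (g x)\<^sup>2)" using f2 g2 by simp
  show "(\<lambda>x. f x * g x) \<in> borel_measurable lborel" using fm gm by simp
  show "AE x in lborel. norm (f x * g x) \<le> norm ((f x)\<^sup>2 + (g x)\<^sup>2)"
  proof (rule AE_I2)
    fix x
    have "\<bar>f x * g x\<bar> \<le> (f x)\<^sup>2 + (g x)\<^sup>2"
      by (rule prod_ineq)
    then show "norm (f x * g x) \<le> norm ((f x)\<^sup>2 + (g x)\<^sup>2)" by simp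
  qed
qed

lemma mixed_int:
  fixes G f g :: "'a::euclidean_space \<Rightarrow> real"
  assumes Gm: "G \<in> borel_measurable borel" and Gb: "\<And>x. \<bar>G x\<bar> \<le> SG"
    and f: "integrable lborel f" and f2: "integrable lborel (\<lambda>x. (f x)\<^sup>2)"
    and g: "integrable lborel g" and g2: "integrable lborel (\<lambda>x. (g x)\<^sup>2)"
  shows "integrable lborel (\<lambda>x. f x * (e * g x - conv G g x))"
proof -
  have fm: "f \<in> borel_measurable lborel" and gm: "g \<in> borel_measurable lborel" using f g by auto
  have "integrable lborel (\<lambda>x. f x * g x)" by (rule prod_int[OF fm gm f2 g2])
  moreover have "integrable lborel (\<lambda>x. conv G g x * f x)"
    by (rule integrable_bounded_mult[OF f _ conv_bound[OF Gm Gb g]]) (use conv_meas[OF Gm gm] in simp)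
  ultimately have "integrable lborel (\<lambda>x. e * (f x * g x) - conv G g x * f x)" by simp
  then show ?thesis by (simp add: algebra_simps)
qed

lemma energy_expand:
  fixes G \<rho> d :: "'a::euclidean_space \<Rightarrow> real"
  assumes Gm: "G \<in> borel_measurable borel" and Gb: "\<And>x. \<bar>G x\<bar> \<le> SG" and Gs: "\<And>z. G (- z) = G z"
    and r: "integrable lborel \<rho>" and r2: "integrable lborel (\<lambda>x. (\<rho> x)\<^sup>2)"
    and d: "integrable lborel d" and d2: "integrable lborel (\<lambda>x. (d x)\<^sup>2)"
  shows "energy e G (\<lambda>x. \<rho> x + t * d x) = energy e G \<rho>
     + t * (\<integral>x. d x * (e * \<rho> x - conv G \<rho> x) \<partial>lborel) + t\<^sup>2 * energy e G d"
proof -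
  have rm: "\<rho> \<in> borel_measurable lborel" and dm: "d \<in> borel_measurable lborel" using r d by auto
  have cl: "conv G (\<lambda>x. \<rho> x + t * d x) y = conv G \<rho> y + t * conv G d y" for y
    using conv_lin[OF Gm Gb r d, of 1 t y] by simp
  have iA: "integrable lborel (\<lambda>x. \<rho> x * (e * \<rho> x - conv G \<rho> x))" by (rule mixed_int[OF Gm Gb r r2 r r2])
  have iB1: "integrable lborel (\<lambda>x. d x * (e * \<rho> x - conv G \<rho> x))" by (rule mixed_int[OF Gm Gb d d2 r r2])
  have iB2: "integrable lborel (\<lambda>x. \<rho> x * (e * d x - conv G d x))" by (rule mixed_int[OF Gm Gb r r2 d d2])
  have iC: "integrable lborel (\<lambda>x. d x * (e * d x - conv G d x))" by (rule mixed_int[OF Gm Gb d d2 d d2])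
  have ird: "integrable lborel (\<lambda>x. \<rho> x * d x)" by (rule prod_int[OF rm dm r2 d2])
  have icr: "integrable lborel (\<lambda>x. d x * conv G \<rho> x)"
    by (rule integrable_bounded_mult[OF d _ conv_bound[OF Gm Gb r], simplified mult.commute])
       (use conv_meas[OF Gm rm] in simp)
  have icd: "integrable lborel (\<lambda>x. \<rho> x * conv G d x)"
    by (rule integrable_bounded_mult[OF r _ conv_bound[OF Gm Gb d], simplified mult.commute])
       (use conv_meas[OF Gm dm] in simp)
  have eqB: "(\<integral>x. \<rho> x * (e * d x - conv G d x) \<partial>lborel) = (\<integral>x. d x * (e * \<rho> x - conv G \<rho> x) \<partial>lborel)"
  proof -
    have "(\<integral>x. \<rho> x * (e * d x - conv G d x) \<partial>lborel) = (\<integral>x. e * (\<rho> x * d x) - \<rho> x * conv G d x \<partial>lborel)"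
      by (rule Bochner_Integration.integral_cong) (auto simp: algebra_simps)
    also have "\<dots> = e * (\<integral>x. \<rho> x * d x \<partial>lborel) - (\<integral>x. \<rho> x * conv G d x \<partial>lborel)"
      using ird icd by simp
    also have "(\<integral>x. \<rho> x * conv G d x \<partial>lborel) = (\<integral>x. d x * conv G \<rho> x \<partial>lborel)"
      by (rule conv_sym[OF Gm Gb Gs r d])
    also have "e * (\<integral>x. \<rho> x * d x \<partial>lborel) - (\<integral>x. d x * conv G \<rho> x \<partial>lborel)
       = (\<integral>x. e * (\<rho> x * d x) - d x * conv G \<rho> x \<partial>lborel)"
      using ird icr by simp
    also have "\<dots> = (\<integral>x. d x * (e * \<rho> x - conv G \<rho> x) \<partial>lborel)"
      by (rule Bochner_Integration.integral_cong) (auto simp: algebra_simps)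
    finally show ?thesis .
  qed
  have "(\<integral>x. (\<rho> x + t * d x) * (e * (\<rho> x + t * d x) - conv G (\<lambda>x. \<rho> x + t * d x) x) \<partial>lborel)
      = (\<integral>x. \<rho> x * (e * \<rho> x - conv G \<rho> x) + t * (d x * (e * \<rho> x - conv G \<rho> x))
          + t * (\<rho> x * (e * d x - conv G d x)) + t\<^sup>2 * (d x * (e * d x - conv G d x)) \<partial>lborel)"
    by (rule Bochner_Integration.integral_cong) (auto simp: cl algebra_simps power2_eq_square)
  also have "\<dots> = (\<integral>x. \<rho> x * (e * \<rho> x - conv G \<rho> x) \<partial>lborel) + t * (\<integral>x. d x * (e * \<rho> x - conv G \<rho> x) \<partial>lborel)
          + t * (\<integral>x. \<rho> x * (e * d x - conv G d x) \<partial>lborel) + t\<^sup>2 * (\<integral>x. d x * (e * d x - conv G d x) \<partial>lborel)"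
    using iA iB1 iB2 iC by simp
  finally show ?thesis unfolding energy_def eqB by (simp add: algebra_simps)
qed

lemma conv_comb_P:
  fixes \<rho> \<eta> :: "'a::euclidean_space \<Rightarrow> real"
  assumes "\<rho> \<in> Pset" "L2 \<rho>" "\<eta> \<in> Pset" "L2 \<eta>" "0 \<le> t" "t \<le> 1"
  shows "(\<lambda>x. \<rho> x + t * (\<eta> x - \<rho> x)) \<in> Pset \<and> L2 (\<lambda>x. \<rho> x + t * (\<eta> x - \<rho> x))"
proof -
  have r: "integrable lborel \<rho>" "AE x in lborel. 0 \<le> \<rho> x" "(\<integral>x. \<rho> x \<partial>lborel) = 1"
    and h: "integrable lborel \<eta>" "AE x in lborel. 0 \<le> \<eta> x" "(\<integral>x. \<eta> x \<partial>lborel) = 1"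
    and r2: "\<rho> \<in> borel_measurable lborel" "integrable lborel (\<lambda>x. (\<rho> x)\<^sup>2)"
    and h2: "\<eta> \<in> borel_measurable lborel" "integrable lborel (\<lambda>x. (\<eta> x)\<^sup>2)"
    using assms unfolding Pset_def L2_def by auto
  have eq: "(\<lambda>x. \<rho> x + t * (\<eta> x - \<rho> x)) = (\<lambda>x. (1 - t) * \<rho> x + t * \<eta> x)"
    by (rule ext) (simp add: algebra_simps)
  have "(\<lambda>x. (1 - t) * \<rho> x + t * \<eta> x) \<in> Pset"
    unfolding Pset_def
  proof (intro CollectI conjI)
    show "integrable lborel (\<lambda>x. (1 - t) * \<rho> x + t * \<eta> x)" using r h by simp
    show "AE x in lborel. 0 \<le> (1 - t) * \<rho> x + t * \<eta> x"
      using r(2) h(2) by eventually_elim (use assms in simp)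
    show "(\<integral>x. (1 - t) * \<rho> x + t * \<eta> x \<partial>lborel) = 1" using r h by simp
  qed
  moreover have "L2 (\<lambda>x. (1 - t) * \<rho> x + t * \<eta> x)"
    unfolding L2_def using sq_int_lin[OF r2(1) h2(1) r2(2) h2(2)] r2 h2 by simp
  ultimately show ?thesis unfolding eq by simp
qed

lemma EL_ineq:
  fixes G \<rho> \<eta> :: "'a::euclidean_space \<Rightarrow> real"
  assumes Gm: "G \<in> borel_measurable borel" and Gb: "\<And>x. \<bar>G x\<bar> \<le> SG" and Gs: "\<And>z. G (- z) = G z"
    and rP: "\<rho> \<in> Pset" and rL: "L2 \<rho>"
    and rmin: "\<forall>\<eta>\<in>Pset. L2 \<eta> \<longrightarrow> energy \<epsilon> G \<rho> \<le> energy \<epsilon> G \<eta>"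
    and hP: "\<eta> \<in> Pset" and hL: "L2 \<eta>"
  shows "0 \<le> (\<integral>x. (\<eta> x - \<rho> x) * (\<epsilon> * \<rho> x - conv G \<rho> x) \<partial>lborel)"
proof (rule ccontr)
  define c where "c = (\<integral>x. (\<eta> x - \<rho> x) * (\<epsilon> * \<rho> x - conv G \<rho> x) \<partial>lborel)"
  define q where "q = energy \<epsilon> G (\<lambda>x. \<eta> x - \<rho> x)"
  assume "\<not> 0 \<le> (\<integral>x. (\<eta> x - \<rho> x) * (\<epsilon> * \<rho> x - conv G \<rho> x) \<partial>lborel)"
  then have c0: "c < 0" unfolding c_def by simp
  have r: "integrable lborel \<rho>" "\<rho> \<in> borel_measurable lborel" "integrable lborel (\<lambda>x. (\<rho> x)\<^sup>2)"
    and h: "integrable lborel \<eta>" "\<eta> \<in> borel_measurable lborel" "integrable lborel (\<lambda>x. (\<eta> x)\<^sup>2)"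
    using rP rL hP hL unfolding Pset_def L2_def by auto
  have d: "integrable lborel (\<lambda>x. \<eta> x - \<rho> x)" using r h by simp
  have d2: "integrable lborel (\<lambda>x. (\<eta> x - \<rho> x)\<^sup>2)"
    using sq_int_lin[OF h(2) r(2) h(3) r(3), of 1 "-1"] by simp
  have key: "0 \<le> t * c + t\<^sup>2 * q" if t: "0 \<le> t" "t \<le> 1" for t
  proof -
    have "energy \<epsilon> G \<rho> \<le> energy \<epsilon> G (\<lambda>x. \<rho> x + t * (\<eta> x - \<rho> x))"
      using rmin conv_comb_P[OF rP rL hP hL t] by blast
    also have "\<dots> = energy \<epsilon> G \<rho> + t * c + t\<^sup>2 * q"
      unfolding c_def q_def by (rule energy_expand[OF Gm Gb Gs r(1) r(3) d d2])
    finally show ?thesis by simp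
  qed
  define t0 where "t0 = min 1 (- c / (2 * (\<bar>q\<bar> + 1)))"
  have t0pos: "0 < t0" and t01: "t0 \<le> 1" unfolding t0_def using c0
    by (auto simp: field_simps)
  have "t0 * q \<le> t0 * \<bar>q\<bar>" using t0pos by (simp add: mult_left_mono)
  also have "\<dots> \<le> (- c / (2 * (\<bar>q\<bar> + 1))) * \<bar>q\<bar>"
    by (rule mult_right_mono) (auto simp: t0_def)
  also have "\<dots> \<le> - c / 2"
  proof -
    have "(- c / (2 * (\<bar>q\<bar> + 1))) * \<bar>q\<bar> = (- c / 2) * (\<bar>q\<bar> / (\<bar>q\<bar> + 1))" by (simp add: field_simps)
    also have "\<dots> \<le> (- c / 2) * 1"
      using c0 by (intro mult_left_mono) (auto simp: field_simps)
    finally show ?thesis by simp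
  qed
  finally have "t0 * q \<le> - c / 2" .
  then have "t0 * (c + t0 * q) \<le> t0 * (c / 2)" using t0pos by (intro mult_left_mono) auto
  moreover have "t0 * (c / 2) < 0" using t0pos c0 by (simp add: mult_pos_neg)
  ultimately have "t0 * c + t0\<^sup>2 * q < 0" by (simp add: power2_eq_square algebra_simps)
  with key[OF less_imp_le[OF t0pos] t01] show False by simp
qed

lemma EL_AE:
  fixes G \<rho> :: "'a::euclidean_space \<Rightarrow> real"
  assumes Gm: "G \<in> borel_measurable borel" and Gb: "\<And>x. \<bar>G x\<bar> \<le> SG" and Gs: "\<And>z. G (- z) = G z"
    and eps: "0 < \<epsilon>"
    and rP: "\<rho> \<in> Pset" and rL: "L2 \<rho>"
    and rmin: "\<forall>\<eta>\<in>Pset. L2 \<eta> \<longrightarrow> energy \<epsilon> G \<rho> \<le> energy \<epsilon> G \<eta>"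
  shows "\<exists>lam. AE x in lborel. \<epsilon> * \<rho> x = max (conv G \<rho> x + lam) 0"
proof -
  have r: "integrable lborel \<rho>" "\<rho> \<in> borel_measurable lborel" "integrable lborel (\<lambda>x. (\<rho> x)\<^sup>2)"
    "AE x in lborel. 0 \<le> \<rho> x" "(\<integral>x. \<rho> x \<partial>lborel) = 1"
    using rP rL unfolding Pset_def L2_def by auto
  define \<Phi> where "\<Phi> x = \<epsilon> * \<rho> x - conv G \<rho> x" for x
  define lam where "lam = (\<integral>x. \<rho> x * \<Phi> x \<partial>lborel)"
  have um[measurable]: "conv G \<rho> \<in> borel_measurable borel" by (rule conv_meas[OF Gm r(2)])
  have rm[measurable]: "\<rho> \<in> borel_measurable borel" using r(2) by simp
  have Phim[measurable]: "\<Phi> \<in> borel_measurable borel" unfolding \<Phi>_def[abs_def] by measurable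
  have iRP: "integrable lborel (\<lambda>x. \<rho> x * \<Phi> x)"
    unfolding \<Phi>_def by (rule mixed_int[OF Gm Gb r(1) r(3) r(1) r(3)])
  have S_null: "emeasure lborel {x. x \<in> ball 0 (real n) \<and> \<Phi> x < lam - 1 / real (Suc n)} = 0" for n
  proof (rule ccontr)
    define S where "S = {x. x \<in> ball 0 (real n) \<and> \<Phi> x < lam - 1 / real (Suc n)}"
    assume "emeasure lborel {x. x \<in> ball 0 (real n) \<and> \<Phi> x < lam - 1 / real (Suc n)} \<noteq> 0"
    then have Sne: "emeasure lborel S \<noteq> 0" unfolding S_def .
    have Ss[measurable]: "S \<in> sets lborel" unfolding S_def by measurable
    have Sfin: "emeasure lborel S < \<infinity>"
      by (rule emeasure_bounded_finite, rule bounded_subset[OF bounded_ball[of 0 "real n"]]) (auto simp: S_def)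
    define m where "m = measure lborel S"
    have "emeasure lborel S = ennreal m" using Sfin by (simp add: m_def emeasure_eq_ennreal_measure less_top)
    then have "m \<noteq> 0" using Sne by auto
    moreover have "0 \<le> m" by (simp add: m_def)
    ultimately have mpos: "0 < m" by simp
    define \<eta> where "\<eta> x = indicator S x / m" for x
    have ind: "integrable lborel (indicator S :: 'a \<Rightarrow> real)"
      using Sfin Ss by (intro integrable_real_indicator) auto
    have hi: "integrable lborel \<eta>" unfolding \<eta>_def using ind by simp
    have hm: "\<eta> \<in> borel_measurable lborel" using hi by auto
    have h2: "integrable lborel (\<lambda>x. (\<eta> x)\<^sup>2)"
    proof -
      have "(\<lambda>x. (\<eta> x)\<^sup>2) = (\<lambda>x. indicator S x / m\<^sup>2)"
        by (rule ext) (simp add: \<eta>_def indicator_def power2_eq_square)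
      then show ?thesis using ind by simp
    qed
    have hP: "\<eta> \<in> Pset" unfolding Pset_def
    proof (intro CollectI conjI hi)
      show "AE x in lborel. 0 \<le> \<eta> x" using mpos by (auto simp: \<eta>_def)
      show "(\<integral>x. \<eta> x \<partial>lborel) = 1" using mpos Sfin
        by (simp add: \<eta>_def m_def)
    qed
    have hL: "L2 \<eta>" unfolding L2_def using hm h2 by simp
    have iHP: "integrable lborel (\<lambda>x. \<eta> x * \<Phi> x)"
      unfolding \<Phi>_def by (rule mixed_int[OF Gm Gb hi h2 r(1) r(3)])
    have "0 \<le> (\<integral>x. (\<eta> x - \<rho> x) * \<Phi> x \<partial>lborel)"
      unfolding \<Phi>_def by (rule EL_ineq[OF Gm Gb Gs rP rL rmin hP hL])
    also have "\<dots> = (\<integral>x. \<eta> x * \<Phi> x \<partial>lborel) - lam"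
    proof -
      have "(\<integral>x. (\<eta> x - \<rho> x) * \<Phi> x \<partial>lborel) = (\<integral>x. \<eta> x * \<Phi> x - \<rho> x * \<Phi> x \<partial>lborel)"
        by (simp add: algebra_simps)
      also have "\<dots> = (\<integral>x. \<eta> x * \<Phi> x \<partial>lborel) - lam" using iHP iRP by (simp add: lam_def)
      finally show ?thesis .
    qed
    finally have ge: "lam \<le> (\<integral>x. \<eta> x * \<Phi> x \<partial>lborel)" by simp
    have "(\<integral>x. \<eta> x * \<Phi> x \<partial>lborel) \<le> (\<integral>x. \<eta> x * (lam - 1 / real (Suc n)) \<partial>lborel)"
    proof (rule integral_mono[OF iHP])
      show "integrable lborel (\<lambda>x. \<eta> x * (lam - 1 / real (Suc n)))" using hi by simp
      fix x
      show "\<eta> x * \<Phi> x \<le> \<eta> x * (lam - 1 / real (Suc n))"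
        using mpos by (cases "x \<in> S") (auto simp: \<eta>_def S_def divide_right_mono)
    qed
    also have "\<dots> = lam - 1 / real (Suc n)"
      using hP unfolding Pset_def by simp
    finally have "(\<integral>x. \<eta> x * \<Phi> x \<partial>lborel) \<le> lam - 1 / real (Suc n)" .
    with ge show False by (smt (verit) divide_pos_pos of_nat_0_less_iff zero_less_Suc)
  qed
  have "AE x in lborel. x \<notin> {x. x \<in> ball 0 (real n) \<and> \<Phi> x < lam - 1 / real (Suc n)}" for n
    by (rule AE_not_in) (use S_null[of n] in \<open>auto intro: null_setsI\<close>)
  then have "AE x in lborel. \<forall>n. x \<notin> {x. x \<in> ball 0 (real n) \<and> \<Phi> x < lam - 1 / real (Suc n)}"
    by (simp add: AE_all_countable)
  then have PhiGE: "AE x in lborel. lam \<le> \<Phi> x"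
  proof (eventually_elim)
    case (elim x)
    show ?case
    proof (rule ccontr)
      assume "\<not> lam \<le> \<Phi> x"
      then have gap: "0 < lam - \<Phi> x" by simp
      obtain n1 :: nat where n1: "norm x < real n1" using reals_Archimedean2 by blast
      obtain n2 :: nat where n2: "1 / (lam - \<Phi> x) < real n2" using reals_Archimedean2 by blast
      define n where "n = max n1 n2"
      have "norm x < real n" using n1 unfolding n_def by (simp add: less_le_trans)
      moreover have "1 / real (Suc n) < lam - \<Phi> x"
      proof -
        have "1 / (lam - \<Phi> x) < real (Suc n)" using n2 unfolding n_def by simp
        then show ?thesis using gap by (simp add: field_simps)
      qed
      ultimately have "x \<in> {x. x \<in> ball 0 (real n) \<and> \<Phi> x < lam - 1 / real (Suc n)}" by simp
      then show False using elim by blast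
    qed
  qed
  have iR: "integrable lborel (\<lambda>x. \<rho> x * (\<Phi> x - lam))"
  proof -
    have "integrable lborel (\<lambda>x. \<rho> x * \<Phi> x - lam * \<rho> x)" using iRP r(1) by simp
    then show ?thesis by (simp add: algebra_simps)
  qed
  have "(\<integral>x. \<rho> x * (\<Phi> x - lam) \<partial>lborel) = (\<integral>x. \<rho> x * \<Phi> x - lam * \<rho> x \<partial>lborel)"
    by (simp add: algebra_simps)
  also have "\<dots> = 0" using iRP r(1) r(5) by (simp add: lam_def)
  finally have "(\<integral>x. \<rho> x * (\<Phi> x - lam) \<partial>lborel) = 0" .
  moreover have "AE x in lborel. 0 \<le> \<rho> x * (\<Phi> x - lam)"
    using PhiGE r(4) by eventually_elim simp
  ultimately have slack: "AE x in lborel. \<rho> x * (\<Phi> x - lam) = 0"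
    using integral_nonneg_eq_0_iff_AE[OF iR] by simp
  have "AE x in lborel. \<epsilon> * \<rho> x = max (conv G \<rho> x + lam) 0"
    using slack PhiGE r(4)
  proof eventually_elim
    case (elim x)
    show ?case
    proof (cases "\<rho> x = 0")
      case True
      then show ?thesis using elim by (simp add: \<Phi>_def)
    next
      case False
      then have "\<Phi> x = lam" using elim by simp
      moreover have "0 < \<epsilon> * \<rho> x" using False elim eps by simp
      ultimately show ?thesis by (simp add: \<Phi>_def)
    qed
  qed
  then show ?thesis by blast
qed

lemma cont_meas: "continuous_on UNIV f \<Longrightarrow> f \<in> borel_measurable lborel"
  using borel_measurable_continuous_onI[of f] by simp

lemma dir_u:
  fixes G :: "'a::euclidean_space \<Rightarrow> real" and DG :: "'a \<Rightarrow> 'a" and r :: "'a \<Rightarrow> real"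
  assumes Gd: "\<And>x. (G has_derivative (\<lambda>h. DG x \<bullet> h)) (at x)"
    and DGc: "continuous_on UNIV DG"
    and DGi: "integrable lborel (\<lambda>x. DG x \<bullet> i)"
    and rc: "continuous_on UNIV r" and rb: "\<And>x. \<bar>r x\<bar> \<le> Mr"
    and Gb: "\<And>x. \<bar>G x\<bar> \<le> SG" and ri: "integrable lborel r"
    and t: "0 \<le> t"
  shows "conv G r (x + t *\<^sub>R i) - conv G r x = integral {0..t} (\<lambda>s. conv r (\<lambda>y. DG y \<bullet> i) (x + s *\<^sub>R i))"
proof -
  have Gc: "continuous_on UNIV G"
    by (intro continuous_at_imp_continuous_on ballI has_derivative_continuous[OF Gd])
  have Gm[measurable]: "G \<in> borel_measurable borel" by (rule borel_measurable_continuous_onI[OF Gc])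
  have DGm[measurable]: "DG \<in> borel_measurable borel" by (rule borel_measurable_continuous_onI[OF DGc])
  have rm[measurable]: "r \<in> borel_measurable borel" by (rule borel_measurable_continuous_onI[OF rc])
  have Mr0: "0 \<le> Mr" using rb[of 0] by simp
  define V where "V s = conv r (\<lambda>y. DG y \<bullet> i) (x + s *\<^sub>R i)" for s
  define f where "f s y = indicator {0..t} s * (DG (x + s *\<^sub>R i - y) \<bullet> i) * r y" for s y
  have V_alt: "V s = (\<integral>y. (DG (x + s *\<^sub>R i - y) \<bullet> i) * r y \<partial>lborel)" for s
  proof -
    let ?X = "x + s *\<^sub>R i"
    have "(\<integral>y. (DG (?X - (?X - y)) \<bullet> i) * r (?X - y) \<partial>lborel) = (\<integral>y. (DG (?X - y) \<bullet> i) * r y \<partial>lborel)"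
    proof (rule integral_refl, rule cont_meas)
      show "continuous_on UNIV (\<lambda>y. (DG (?X - y) \<bullet> i) * r y)"
        by (intro continuous_intros continuous_on_compose2[OF DGc] rc) auto
    qed
    then show ?thesis unfolding V_def conv_def by (simp add: mult.commute)
  qed
  have DGic: "continuous_on UNIV (\<lambda>x. DG x \<bullet> i)" by (intro continuous_intros DGc)
  have DGim: "(\<lambda>x. DG x \<bullet> i) \<in> borel_measurable lborel"
    using borel_measurable_continuous_onI[OF DGic] by simp
  have Vc: "continuous_on UNIV V"
  proof -
    have "continuous_on UNIV (conv r (\<lambda>y. DG y \<bullet> i))" by (rule conv_cont[OF rc rb DGi])
    moreover have "continuous_on UNIV (\<lambda>s. x + s *\<^sub>R i)" by (intro continuous_intros)
    ultimately show ?thesis unfolding V_def using continuous_on_compose2 by blast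
  qed
  have FTC: "G (x + t *\<^sub>R i - y) - G (x - y) = (\<integral>s. indicator {0..t} s * (DG (x + s *\<^sub>R i - y) \<bullet> i) \<partial>lborel)" for y
  proof -
    have "(\<integral>s. indicator {0..t} s *\<^sub>R (DG ((x - y) + s *\<^sub>R i) \<bullet> i) \<partial>lborel)
        = G ((x - y) + t *\<^sub>R i) - G ((x - y) + 0 *\<^sub>R i)"
    proof (rule integral_FTC_atLeastAtMost[OF t])
      fix s
      have "((\<lambda>s. G ((x - y) + s *\<^sub>R i)) has_real_derivative (DG ((x - y) + s *\<^sub>R i) \<bullet> i)) (at s within {0..t})"
        by (rule dir_deriv) (rule Gd)
      then show "((\<lambda>s. G ((x - y) + s *\<^sub>R i)) has_vector_derivative (DG ((x - y) + s *\<^sub>R i) \<bullet> i)) (at s within {0..t})"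
        by (simp add: has_real_derivative_iff_has_vector_derivative)
    next
      show "continuous_on {0..t} (\<lambda>s. DG ((x - y) + s *\<^sub>R i) \<bullet> i)"
        by (intro continuous_intros continuous_on_compose2[OF DGc]) auto
    qed
    then show ?thesis by (simp add: algebra_simps)
  qed
  have fm: "case_prod f \<in> borel_measurable (lborel \<Otimes>\<^sub>M lborel)"
  proof -
    have c1: "continuous_on UNIV (\<lambda>p::real \<times> 'a. (DG (x + fst p *\<^sub>R i - snd p) \<bullet> i) * r (snd p))"
      by (intro continuous_intros continuous_on_compose2[OF DGc] continuous_on_compose2[OF rc]) auto
    have m1: "(\<lambda>p::real \<times> 'a. (DG (x + fst p *\<^sub>R i - snd p) \<bullet> i) * r (snd p)) \<in> borel_measurable borel"
      by (rule borel_measurable_continuous_onI[OF c1])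
    have m2: "(\<lambda>p::real \<times> 'a. indicator ({0..t} \<times> UNIV) p :: real) \<in> borel_measurable borel"
      by (intro borel_measurable_indicator borel_closed closed_Times) auto
    have "(\<lambda>p::real \<times> 'a. indicator ({0..t} \<times> UNIV) p * ((DG (x + fst p *\<^sub>R i - snd p) \<bullet> i) * r (snd p)))
       \<in> borel_measurable borel"
      using borel_measurable_times[OF m2 m1] by simp
    moreover have "case_prod f = (\<lambda>p::real \<times> 'a. indicator ({0..t} \<times> UNIV) p * ((DG (x + fst p *\<^sub>R i - snd p) \<bullet> i) * r (snd p)))"
      by (auto simp: f_def indicator_def fun_eq_iff)
    ultimately show ?thesis by (simp add: lborel_prod)
  qed
  have DGabs: "(\<integral>y. \<bar>DG (X - y) \<bullet> i\<bar> \<partial>lborel) = (\<integral>y. \<bar>DG y \<bullet> i\<bar> \<partial>lborel)" for X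
    by (rule integral_refl[where f="\<lambda>y. \<bar>DG y \<bullet> i\<bar>"], rule cont_meas) (intro continuous_intros DGc)
  have DGXi: "integrable lborel (\<lambda>y. DG (X - y) \<bullet> i)" for X
    using integrable_refl[OF DGi, of X] by simp
  have fint_s: "integrable lborel (\<lambda>y. f s y)" for s
  proof -
    have "integrable lborel (\<lambda>y. (indicator {0..t} s * r y) * (DG (x + s *\<^sub>R i - y) \<bullet> i))"
    proof (rule integrable_bounded_mult[OF DGXi])
      show "(\<lambda>y. indicator {0..t} s * r y) \<in> borel_measurable lborel" by simp
      fix y show "\<bar>indicator {0..t} s * r y\<bar> \<le> Mr" using rb[of y] Mr0 by (auto simp: indicator_def)
    qed
    then show ?thesis unfolding f_def by (simp add: ac_simps)
  qed
  have fint: "integrable (lborel \<Otimes>\<^sub>M lborel) (case_prod f)"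
  proof (rule lborel_pair.Fubini_integrable[OF fm])
    show "AE s in lborel. integrable lborel (\<lambda>y. case_prod f (s, y))" using fint_s by simp
    have "integrable lborel (\<lambda>s. \<integral>y. norm (f s y) \<partial>lborel)"
    proof (rule Bochner_Integration.integrable_bound)
      show "integrable lborel (\<lambda>s. indicator {0..t} s * (Mr * (\<integral>y. \<bar>DG y \<bullet> i\<bar> \<partial>lborel)))"
        by (intro integrable_mult_left integrable_real_indicator) (auto simp: emeasure_lborel_Icc_eq)
      show "(\<lambda>s. \<integral>y. norm (f s y) \<partial>lborel) \<in> borel_measurable lborel"
      proof (rule lborel.borel_measurable_lebesgue_integral)
        show "(\<lambda>(s, y). norm (f s y)) \<in> borel_measurable (lborel \<Otimes>\<^sub>M lborel)"
        proof -
          have "(\<lambda>p. norm (case_prod f p)) \<in> borel_measurable (lborel \<Otimes>\<^sub>M lborel)"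
            using measurable_compose[OF fm borel_measurable_norm] by (simp add: o_def)
          moreover have "(\<lambda>(s, y). norm (f s y)) = (\<lambda>p. norm (case_prod f p))" by (auto simp: fun_eq_iff)
          ultimately show ?thesis by simp
        qed
      qed
      show "AE s in lborel. norm (\<integral>y. norm (f s y) \<partial>lborel)
         \<le> norm (indicator {0..t} s * (Mr * (\<integral>y. \<bar>DG y \<bullet> i\<bar> \<partial>lborel)))"
      proof (rule AE_I2)
        fix s
        have "(\<integral>y. norm (f s y) \<partial>lborel) \<le> (\<integral>y. indicator {0..t} s * Mr * \<bar>DG (x + s *\<^sub>R i - y) \<bullet> i\<bar> \<partial>lborel)"
        proof (rule integral_mono)
          show "integrable lborel (\<lambda>y. norm (f s y))" using fint_s by simp
          show "integrable lborel (\<lambda>y. indicator {0..t} s * Mr * \<bar>DG (x + s *\<^sub>R i - y) \<bullet> i\<bar>)"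
            using DGXi by simp
          fix y show "norm (f s y) \<le> indicator {0..t} s * Mr * \<bar>DG (x + s *\<^sub>R i - y) \<bullet> i\<bar>"
            unfolding f_def using rb[of y] by (auto simp: indicator_def abs_mult mult.commute intro: mult_right_mono)
        qed
        also have "\<dots> = indicator {0..t} s * (Mr * (\<integral>y. \<bar>DG y \<bullet> i\<bar> \<partial>lborel))"
          using DGabs[of "x + s *\<^sub>R i"] by simp
        finally have "(\<integral>y. norm (f s y) \<partial>lborel) \<le> indicator {0..t} s * (Mr * (\<integral>y. \<bar>DG y \<bullet> i\<bar> \<partial>lborel))" .
        moreover have "0 \<le> (\<integral>y. norm (f s y) \<partial>lborel)" by simp
        ultimately show "norm (\<integral>y. norm (f s y) \<partial>lborel)
         \<le> norm (indicator {0..t} s * (Mr * (\<integral>y. \<bar>DG y \<bullet> i\<bar> \<partial>lborel)))" by simp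
      qed
    qed
    then show "integrable lborel (\<lambda>s. \<integral>y. norm (case_prod f (s, y)) \<partial>lborel)" by simp
  qed
  have "conv G r (x + t *\<^sub>R i) - conv G r x = (\<integral>y. (G (x + t *\<^sub>R i - y) - G (x - y)) * r y \<partial>lborel)"
    unfolding conv_def using conv_integrable[OF Gm Gb ri, of "x + t *\<^sub>R i"] conv_integrable[OF Gm Gb ri, of x]
    by (simp add: left_diff_distrib)
  also have "\<dots> = (\<integral>y. \<integral>s. f s y \<partial>lborel \<partial>lborel)"
    unfolding FTC f_def by (simp add: mult.assoc integral_mult_left_zero[symmetric] del: integral_mult_left_zero)
  also have "\<dots> = (\<integral>s. \<integral>y. f s y \<partial>lborel \<partial>lborel)"
    by (rule lborel_pair.Fubini_integral[OF fint])
  also have "\<dots> = (\<integral>s. indicator {0..t} s * V s \<partial>lborel)"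
    unfolding V_alt f_def by (simp add: mult.assoc integral_mult_right_zero[symmetric] del: integral_mult_right_zero)
  also have "\<dots> = integral {0..t} V"
  proof -
    have "set_integrable lborel {0..t} V"
      unfolding set_integrable_def by (rule borel_integrable_compact) (auto intro: continuous_on_subset[OF Vc])
    from set_borel_integral_eq_integral(2)[OF this] show ?thesis
      by (simp add: set_lebesgue_integral_def)
  qed
  finally show ?thesis unfolding V_def .
qed

lemma sqmax_deriv: "((\<lambda>s::real. (max s 0)\<^sup>2) has_real_derivative 2 * max a 0) (at a)"
proof (cases "a = 0")
  case True
  have "((\<lambda>y. ((max y 0)\<^sup>2 - (max 0 0)\<^sup>2) / (y - 0)) \<longlongrightarrow> 0) (at (0::real))"
  proof (rule Lim_null_comparison)
    show "\<forall>\<^sub>F y in at 0. norm (((max y 0)\<^sup>2 - (max 0 0)\<^sup>2) / (y - 0)) \<le> \<bar>y\<bar>"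
    proof (rule always_eventually, rule allI)
      fix y :: real
      show "norm (((max y 0)\<^sup>2 - (max 0 0)\<^sup>2) / (y - 0)) \<le> \<bar>y\<bar>"
        by (cases "y \<le> 0") (auto simp: power2_eq_square abs_mult max_def)
    qed
    show "((\<lambda>y::real. \<bar>y\<bar>) \<longlongrightarrow> 0) (at 0)"
      using tendsto_rabs_zero[OF tendsto_ident_at[of "0::real" UNIV]] by simp
  qed
  then show ?thesis using True unfolding has_field_derivative_iff by simp
next
  case False
  show ?thesis
  proof (cases "a > 0")
    case True
    have "((\<lambda>s::real. s\<^sup>2) has_real_derivative 2 * a) (at a)"
      by (auto intro!: derivative_eq_intros)
    moreover have "\<And>x. x \<in> UNIV \<Longrightarrow> dist x a < a \<Longrightarrow> x\<^sup>2 = (max x 0)\<^sup>2"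
    proof -
      fix x :: real assume "dist x a < a"
      then have "x > 0" by (simp add: dist_real_def abs_if split: if_splits)
      then show "x\<^sup>2 = (max x 0)\<^sup>2" by simp
    qed
    ultimately have "((\<lambda>s::real. (max s 0)\<^sup>2) has_real_derivative 2 * a) (at a)"
      using has_field_derivative_transform_within[of "\<lambda>s. s\<^sup>2" "2 * a" a UNIV a "\<lambda>s. (max s 0)\<^sup>2"] True
      by simp
    then show ?thesis using True by simp
  next
    case False
    then have aneg: "a < 0" using \<open>a \<noteq> 0\<close> by simp
    have "((\<lambda>s::real. 0) has_real_derivative 0) (at a)" by simp
    moreover have "\<And>x. x \<in> UNIV \<Longrightarrow> dist x a < - a \<Longrightarrow> 0 = (max x 0)\<^sup>2"
    proof -
      fix x :: real assume "dist x a < - a"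
      then have "x < 0" by (simp add: dist_real_def abs_if split: if_splits)
      then show "0 = (max x 0)\<^sup>2" by simp
    qed
    ultimately have "((\<lambda>s::real. (max s 0)\<^sup>2) has_real_derivative 0) (at a)"
      using has_field_derivative_transform_within[of "\<lambda>s. 0" 0 a UNIV "-a" "\<lambda>s. (max s 0)\<^sup>2"] aneg
      by simp
    then show ?thesis using aneg by simp
  qed
qed

lemma weak_grad_AE:
  fixes f g :: "'a::euclidean_space \<Rightarrow> real"
  assumes wg: "weak_grad f w" and gm: "g \<in> borel_measurable lborel" and ae: "AE x in lborel. f x = g x"
  shows "weak_grad g w"
proof -
  have fm: "f \<in> borel_measurable lborel" using wg unfolding weak_grad_def by simp
  show ?thesis
    unfolding weak_grad_def
  proof (intro conjI allI impI ballI)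
    show "g \<in> borel_measurable lborel" by (rule gm)
    show "w \<in> borel_measurable lborel" using wg unfolding weak_grad_def by simp
  next
    fix K :: "'a set" assume K: "compact K"
    have "set_integrable lborel K f" using wg K unfolding weak_grad_def by simp
    moreover have "integrable lborel (\<lambda>x. indicator K x *\<^sub>R f x) = integrable lborel (\<lambda>x. indicator K x *\<^sub>R g x)"
    proof (rule integrable_cong_AE)
      have Km: "(indicator K :: 'a \<Rightarrow> real) \<in> borel_measurable lborel"
        using borel_measurable_indicator[OF borel_compact[OF K]] by simp
      show "(\<lambda>x. indicator K x *\<^sub>R f x) \<in> borel_measurable lborel"
        using borel_measurable_times[OF Km fm] by simp
      show "(\<lambda>x. indicator K x *\<^sub>R g x) \<in> borel_measurable lborel"
        using borel_measurable_times[OF Km gm] by simp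
      show "AE x in lborel. indicator K x *\<^sub>R f x = indicator K x *\<^sub>R g x"
        using ae by eventually_elim simp
    qed
    ultimately show "set_integrable lborel K g" unfolding set_integrable_def by simp
  next
    fix K :: "'a set" and i :: 'a assume "compact K" "i \<in> Basis"
    then show "set_integrable lborel K (\<lambda>x. w x \<bullet> i)" using wg unfolding weak_grad_def by simp
  next
    fix \<phi> :: "'a \<Rightarrow> real" and D\<phi> :: "'a \<Rightarrow> 'a" and i :: 'a
    assume tf: "test_fun \<phi> D\<phi>" and i: "i \<in> Basis"
    have "continuous_on UNIV D\<phi>" using tf unfolding test_fun_def by simp
    then have Dm: "(\<lambda>x. D\<phi> x \<bullet> i) \<in> borel_measurable lborel"
      by (intro cont_meas continuous_intros)
    have "(\<integral>x. g x * (D\<phi> x \<bullet> i) \<partial>lborel) = (\<integral>x. f x * (D\<phi> x \<bullet> i) \<partial>lborel)"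
      by (rule integral_cong_AE) (use fm gm Dm ae in auto)
    also have "\<dots> = - (\<integral>x. (w x \<bullet> i) * \<phi> x \<partial>lborel)" using wg tf i unfolding weak_grad_def by blast
    finally show "(\<integral>x. g x * (D\<phi> x \<bullet> i) \<partial>lborel) = - (\<integral>x. (w x \<bullet> i) * \<phi> x \<partial>lborel)" .
  qed
qed

theorem proposition3p1:
  fixes \<epsilon> :: real
    and G :: "'a::euclidean_space \<Rightarrow> real"
    and DG :: "'a \<Rightarrow> 'a"
    and HG :: "'a \<Rightarrow> ('a \<Rightarrow>\<^sub>L 'a)"
    and g g1 :: "real \<Rightarrow> real"
    and g2_0 :: real
    and \<rho> :: "'a \<Rightarrow> real"
  assumes eps_pos: "\<epsilon> > 0"
    and G_nonneg: "\<forall>x. G x \<ge> 0"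
    and G_supp: "closure {x. G x \<noteq> 0} = UNIV"
    and G_diff: "\<forall>x. (G has_derivative (\<lambda>h. DG x \<bullet> h)) (at x)"
    and DG_diff: "\<forall>x. (DG has_derivative blinfun_apply (HG x)) (at x)"
    and HG_cont: "continuous_on UNIV HG"
    and G_int: "integrable lborel G"
    and DG_int: "\<forall>i\<in>Basis. integrable lborel (\<lambda>x. DG x \<bullet> i)"
    and G_bdd: "bounded (range G)"
    and G_radial: "\<forall>x. G x = g (norm x)"
    and g_deriv: "\<forall>r\<ge>0. (g has_real_derivative g1 r) (at r within {0..})"
    and g_deriv_neg: "\<forall>r>0. g1 r < 0"
    and g_second: "(g1 has_real_derivative g2_0) (at 0 within {0..})"
    and g2_neg: "g2_0 < 0"
    and g_lim: "(g \<longlongrightarrow> 0) at_top"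
    and G_mass: "(\<integral>x. G x \<partial>lborel) = 1"
    and rho_P: "\<rho> \<in> Pset"
    and rho_L2: "L2 \<rho>"
    and rho_min: "\<forall>\<eta>\<in>Pset. L2 \<eta> \<longrightarrow> energy \<epsilon> G \<rho> \<le> energy \<epsilon> G \<eta>"
  shows "\<exists>w v. weak_grad (\<lambda>x. (\<rho> x)\<^sup>2 / 2) w \<and> weak_grad (conv G \<rho>) v \<and>
           (AE x in lborel. \<epsilon> *\<^sub>R w x - \<rho> x *\<^sub>R v x = 0)"
proof -
  have Gd: "\<And>x. (G has_derivative (\<lambda>h. DG x \<bullet> h)) (at x)" using G_diff by blast
  have Gc: "continuous_on UNIV G"
    by (intro continuous_at_imp_continuous_on ballI has_derivative_continuous[OF Gd])
  have Gm: "G \<in> borel_measurable borel" by (rule borel_measurable_continuous_onI[OF Gc])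
  obtain SG where Gb: "\<And>x. \<bar>G x\<bar> \<le> SG"
    using G_bdd unfolding bounded_iff by (metis real_norm_def rangeI)
  have Gs: "\<And>z. G (- z) = G z" using G_radial by simp
  have DGc: "continuous_on UNIV DG"
    using DG_diff by (intro continuous_at_imp_continuous_on ballI has_derivative_continuous) blast
  have DGi: "\<And>i. i \<in> Basis \<Longrightarrow> integrable lborel (\<lambda>x. DG x \<bullet> i)" using DG_int by blast
  have r1: "integrable lborel \<rho>" and rm: "\<rho> \<in> borel_measurable lborel"
    using rho_P unfolding Pset_def by auto
  obtain lam where lam: "AE x in lborel. \<epsilon> * \<rho> x = max (conv G \<rho> x + lam) 0"
    using EL_AE[OF Gm Gb Gs eps_pos rho_P rho_L2 rho_min] by blast
  define u where "u = conv G \<rho>"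
  define Mu where "Mu = SG * (\<integral>y. \<bar>\<rho> y\<bar> \<partial>lborel)"
  have ub: "\<And>x. \<bar>u x\<bar> \<le> Mu" unfolding u_def Mu_def by (rule conv_bound[OF Gm Gb r1])
  have uc: "continuous_on UNIV u" unfolding u_def by (rule conv_cont[OF Gc Gb r1])
  have um: "u \<in> borel_measurable borel" by (rule borel_measurable_continuous_onI[OF uc])
  have Mu0: "0 \<le> Mu" using ub[of 0] by simp
  define rt where "rt x = max (u x + lam) 0 / \<epsilon>" for x
  define Mr where "Mr = (Mu + \<bar>lam\<bar>) / \<epsilon>"
  have rtc: "continuous_on UNIV rt" unfolding rt_def
    by (intro continuous_intros uc) (use eps_pos in auto)
  have rtm: "rt \<in> borel_measurable borel" by (rule borel_measurable_continuous_onI[OF rtc])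
  have pb: "\<bar>max (u x + lam) 0\<bar> \<le> Mu + \<bar>lam\<bar>" for x
    using ub[of x] Mu0 by (auto simp: max_def abs_if split: if_splits)
  have rtb: "\<And>x. \<bar>rt x\<bar> \<le> Mr" unfolding rt_def Mr_def
    using pb eps_pos by (simp add: divide_right_mono)
  have Mr0: "0 \<le> Mr" using rtb[of 0] by simp
  have rt_ae: "AE x in lborel. \<rho> x = rt x"
    using lam by eventually_elim (use eps_pos in \<open>simp add: rt_def u_def field_simps\<close>)
  have rti: "integrable lborel rt"
    using integrable_cong_AE[of \<rho> lborel rt] r1 rm rtm rt_ae by simp
  have u_rt: "\<And>x. u x = conv G rt x"
    unfolding u_def conv_def
  proof (rule integral_cong_AE)
    fix x
    show "(\<lambda>y. G (x - y) * \<rho> y) \<in> borel_measurable lborel"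
      using conv_integrable[OF Gm Gb r1, of x] by simp
    show "(\<lambda>y. G (x - y) * rt y) \<in> borel_measurable lborel"
      using conv_integrable[OF Gm Gb rti, of x] by simp
    show "AE y in lborel. G (x - y) * \<rho> y = G (x - y) * rt y" using rt_ae by eventually_elim simp
  qed
  define vv where "vv i x = conv rt (\<lambda>y. DG y \<bullet> i) x" for i x
  define v where "v x = (\<Sum>i\<in>Basis. vv i x *\<^sub>R i)" for x
  have vvc: "\<And>i. i \<in> Basis \<Longrightarrow> continuous_on UNIV (vv i)"
    unfolding vv_def[abs_def] by (rule conv_cont[OF rtc rtb DGi])
  define Mv where "Mv = (\<Sum>i\<in>(Basis::'a set). Mr * (\<integral>y. \<bar>DG y \<bullet> i\<bar> \<partial>lborel))"
  have vvb: "\<And>i x. i \<in> Basis \<Longrightarrow> \<bar>vv i x\<bar> \<le> Mv"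
  proof -
    fix i x assume i: "(i::'a) \<in> Basis"
    have "\<bar>vv i x\<bar> \<le> Mr * (\<integral>y. \<bar>DG y \<bullet> i\<bar> \<partial>lborel)"
      unfolding vv_def by (rule conv_bound[OF rtm rtb DGi[OF i]])
    also have "\<dots> \<le> Mv" unfolding Mv_def
      by (rule member_le_sum) (use i Mr0 in auto)
    finally show "\<bar>vv i x\<bar> \<le> Mv" .
  qed
  have Mv0: "0 \<le> Mv" using vvb[of "SOME i. i \<in> Basis" 0] by (metis abs_ge_zero order_trans someI_ex nonempty_Basis ex_in_conv)
  have v_inner: "\<And>i x. i \<in> Basis \<Longrightarrow> v x \<bullet> i = vv i x" by (simp add: v_def)
  have vc: "continuous_on UNIV v" unfolding v_def
    by (intro continuous_intros vvc) auto
  have vm: "v \<in> borel_measurable borel" by (rule borel_measurable_continuous_onI[OF vc])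
  have ud: "\<And>x i t. i \<in> Basis \<Longrightarrow> 0 \<le> t \<Longrightarrow> u (x + t *\<^sub>R i) - u x = integral {0..t} (\<lambda>s. vv i (x + s *\<^sub>R i))"
    unfolding u_rt vv_def by (rule dir_u[OF Gd DGc DGi rtc rtb Gb rti])
  have Vc: "\<And>x i. i \<in> Basis \<Longrightarrow> continuous_on UNIV (\<lambda>s. vv i (x + s *\<^sub>R i))"
  proof -
    fix x i assume i: "(i::'a) \<in> Basis"
    have "continuous_on UNIV (\<lambda>s::real. x + s *\<^sub>R i)" by (intro continuous_intros)
    then show "continuous_on UNIV (\<lambda>s. vv i (x + s *\<^sub>R i))" using continuous_on_compose2[OF vvc[OF i]] by blast
  qed
  have uder: "\<And>x i. i \<in> Basis \<Longrightarrow> ((\<lambda>t. u (x + t *\<^sub>R i)) has_real_derivative (vv i x)) (at 0 within {0..1})"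
  proof -
    fix x i assume i: "(i::'a) \<in> Basis"
    have "((\<lambda>t. integral {0..t} (\<lambda>s. vv i (x + s *\<^sub>R i))) has_real_derivative vv i (x + 0 *\<^sub>R i)) (at 0 within {0..1})"
      by (rule integral_has_real_derivative) (use continuous_on_subset[OF Vc[OF i]] in auto)
    then have "((\<lambda>t. u x + integral {0..t} (\<lambda>s. vv i (x + s *\<^sub>R i))) has_real_derivative 0 + vv i (x + 0 *\<^sub>R i)) (at 0 within {0..1})"
      by (rule DERIV_add[OF DERIV_const])
    then have d1: "((\<lambda>t. u x + integral {0..t} (\<lambda>s. vv i (x + s *\<^sub>R i))) has_real_derivative vv i x) (at 0 within {0..1})"
      by simp
    show "((\<lambda>t. u (x + t *\<^sub>R i)) has_real_derivative (vv i x)) (at 0 within {0..1})"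
    proof (rule has_field_derivative_transform_within[OF d1, of 1])
      fix t assume "t \<in> {0..1::real}"
      then show "u x + integral {0..t} (\<lambda>s. vv i (x + s *\<^sub>R i)) = u (x + t *\<^sub>R i)"
        using ud[OF i, of t x] by simp
    qed auto
  qed
  have ulip: "\<And>x i t. i \<in> Basis \<Longrightarrow> 0 \<le> t \<Longrightarrow> t \<le> 1 \<Longrightarrow> \<bar>u (x + t *\<^sub>R i) - u x\<bar> \<le> Mv * t"
  proof -
    fix x i t assume i: "(i::'a) \<in> Basis" and t: "0 \<le> t" "t \<le> (1::real)"
    have "norm (integral {0..t} (\<lambda>s. vv i (x + s *\<^sub>R i))) \<le> Mv * (t - 0)"
      by (rule integral_bound) (use t continuous_on_subset[OF Vc[OF i]] vvb[OF i] in auto)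
    then show "\<bar>u (x + t *\<^sub>R i) - u x\<bar> \<le> Mv * t" using ud[OF i t(1)] by simp
  qed
  have wg1: "weak_grad (conv G \<rho>) v"
    unfolding u_def[symmetric]
    by (rule weak_grad_diffquot[OF um vm ub, where Mw=Mv and L=Mv]) (auto simp: v_inner vvb uder ulip)
  define p where "p s = max (s + lam) 0" for s
  define Fq where "Fq s = (p s)\<^sup>2 / (2 * \<epsilon>\<^sup>2)" for s
  define Fd where "Fd s = p s / \<epsilon>\<^sup>2" for s
  define A where "A = Mu + \<bar>lam\<bar>"
  have A0: "0 \<le> A" unfolding A_def using Mu0 by simp
  have pA: "\<And>x. 0 \<le> p (u x) \<and> p (u x) \<le> A" unfolding p_def A_def using pb by (auto simp: max_def)
  have Fder: "\<And>s. (Fq has_real_derivative Fd s) (at s)"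
  proof -
    fix s
    have "((\<lambda>s. s + lam) has_real_derivative 1) (at s)" by (auto intro!: derivative_eq_intros)
    from DERIV_chain2[OF sqmax_deriv this]
    have "((\<lambda>s. (max (s + lam) 0)\<^sup>2) has_real_derivative 2 * max (s + lam) 0 * 1) (at s)" .
    from DERIV_cdivide[OF this, of "2 * \<epsilon>\<^sup>2"]
    show "(Fq has_real_derivative Fd s) (at s)"
      unfolding Fq_def[abs_def] Fd_def p_def by simp
  qed
  have Fqc: "continuous_on UNIV Fq"
    by (intro continuous_at_imp_continuous_on ballI DERIV_isCont[OF Fder])
  have Fdc: "continuous_on UNIV Fd" unfolding Fd_def[abs_def] p_def
    by (intro continuous_intros) (use eps_pos in auto)
  have plip: "\<bar>p a - p b\<bar> \<le> \<bar>a - b\<bar>" for a b unfolding p_def by (auto simp: max_def)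
  have Flip: "\<And>x y. \<bar>Fq (u y) - Fq (u x)\<bar> \<le> A / \<epsilon>\<^sup>2 * \<bar>u y - u x\<bar>"
  proof -
    fix x y
    have "\<bar>Fq (u y) - Fq (u x)\<bar> = \<bar>p (u y) - p (u x)\<bar> * (p (u y) + p (u x)) / (2 * \<epsilon>\<^sup>2)"
    proof -
      have "Fq (u y) - Fq (u x) = (p (u y) - p (u x)) * (p (u y) + p (u x)) / (2 * \<epsilon>\<^sup>2)"
        unfolding Fq_def by (simp add: power2_eq_square algebra_simps diff_divide_distrib[symmetric])
      moreover have "0 \<le> p (u y) + p (u x)" using pA[of x] pA[of y] by simp
      moreover have "0 < 2 * \<epsilon>\<^sup>2" using eps_pos by simp
      ultimately show ?thesis by (simp add: abs_mult abs_divide)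
    qed
    also have "\<dots> \<le> \<bar>u y - u x\<bar> * (2 * A) / (2 * \<epsilon>\<^sup>2)"
      using pA[of x] pA[of y] plip[of "u y" "u x"] eps_pos
      by (intro divide_right_mono mult_mono) auto
    also have "\<dots> = A / \<epsilon>\<^sup>2 * \<bar>u y - u x\<bar>" by (simp add: field_simps)
    finally show "\<bar>Fq (u y) - Fq (u x)\<bar> \<le> A / \<epsilon>\<^sup>2 * \<bar>u y - u x\<bar>" .
  qed
  define f2 where "f2 x = Fq (u x)" for x
  define w2 where "w2 x = Fd (u x) *\<^sub>R v x" for x
  have f2c: "continuous_on UNIV f2" unfolding f2_def[abs_def]
    using continuous_on_compose2[OF Fqc uc] by simp
  have w2c: "continuous_on UNIV w2" unfolding w2_def[abs_def]
    using continuous_on_compose2[OF Fdc uc] vc by (intro continuous_intros) auto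
  have f2b: "\<And>x. \<bar>f2 x\<bar> \<le> A\<^sup>2 / (2 * \<epsilon>\<^sup>2)"
    unfolding f2_def Fq_def using pA eps_pos
    by (simp add: abs_divide divide_right_mono power_mono)
  have w2b: "\<And>x i. i \<in> Basis \<Longrightarrow> \<bar>w2 x \<bullet> i\<bar> \<le> A / \<epsilon>\<^sup>2 * Mv"
  proof -
    fix x i assume i: "(i::'a) \<in> Basis"
    have "\<bar>w2 x \<bullet> i\<bar> = p (u x) / \<epsilon>\<^sup>2 * \<bar>vv i x\<bar>"
      unfolding w2_def Fd_def using v_inner[OF i] pA[of x] by (simp add: abs_mult)
    also have "\<dots> \<le> A / \<epsilon>\<^sup>2 * Mv"
      using pA[of x] vvb[OF i, of x] eps_pos Mv0 by (intro mult_mono divide_right_mono) auto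
    finally show "\<bar>w2 x \<bullet> i\<bar> \<le> A / \<epsilon>\<^sup>2 * Mv" .
  qed
  have f2lip: "\<And>x i t. i \<in> Basis \<Longrightarrow> 0 \<le> t \<Longrightarrow> t \<le> 1 \<Longrightarrow> \<bar>f2 (x + t *\<^sub>R i) - f2 x\<bar> \<le> (A / \<epsilon>\<^sup>2 * Mv) * t"
  proof -
    fix x i t assume i: "(i::'a) \<in> Basis" and t: "0 \<le> t" "t \<le> (1::real)"
    have "\<bar>f2 (x + t *\<^sub>R i) - f2 x\<bar> \<le> A / \<epsilon>\<^sup>2 * \<bar>u (x + t *\<^sub>R i) - u x\<bar>"
      unfolding f2_def by (rule Flip)
    also have "\<dots> \<le> A / \<epsilon>\<^sup>2 * (Mv * t)"
      using ulip[OF i t] A0 eps_pos by (intro mult_left_mono) auto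
    finally show "\<bar>f2 (x + t *\<^sub>R i) - f2 x\<bar> \<le> (A / \<epsilon>\<^sup>2 * Mv) * t" by (simp add: mult.assoc)
  qed
  have f2der: "\<And>x i. i \<in> Basis \<Longrightarrow> ((\<lambda>t. f2 (x + t *\<^sub>R i)) has_real_derivative (w2 x \<bullet> i)) (at 0 within {0..1})"
  proof -
    fix x i assume i: "(i::'a) \<in> Basis"
    from DERIV_chain2[OF Fder uder[OF i, of x]]
    have "((\<lambda>t. Fq (u (x + t *\<^sub>R i))) has_real_derivative Fd (u (x + 0 *\<^sub>R i)) * vv i x) (at 0 within {0..1})"
      by simp
    then show "((\<lambda>t. f2 (x + t *\<^sub>R i)) has_real_derivative (w2 x \<bullet> i)) (at 0 within {0..1})"
      unfolding f2_def w2_def using v_inner[OF i] by simp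
  qed
  have wg2: "weak_grad f2 w2"
    by (rule weak_grad_diffquot[OF borel_measurable_continuous_onI[OF f2c] borel_measurable_continuous_onI[OF w2c]
          f2b w2b f2lip f2der])
  have wg3: "weak_grad (\<lambda>x. (\<rho> x)\<^sup>2 / 2) w2"
  proof (rule weak_grad_AE[OF wg2])
    show "(\<lambda>x. (\<rho> x)\<^sup>2 / 2) \<in> borel_measurable lborel" using rm by simp
    show "AE x in lborel. f2 x = (\<rho> x)\<^sup>2 / 2"
      using rt_ae by eventually_elim (use eps_pos in \<open>simp add: f2_def Fq_def rt_def p_def power_divide\<close>)
  qed
  have ae: "AE x in lborel. \<epsilon> *\<^sub>R w2 x - \<rho> x *\<^sub>R v x = 0"
    using rt_ae
  proof eventually_elim
    case (elim x)
    have "\<epsilon> * Fd (u x) = rt x" unfolding Fd_def rt_def p_def using eps_pos by (simp add: power2_eq_square)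
    then show ?case unfolding w2_def using elim by simp
  qed
  show ?thesis using wg3 wg1 ae by blast
qed

end
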